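(* Consider the following setting. $\mathcal{X}\subseteq\mathbb{R}^d$ is a nonempty compact convex set; $F:\mathbb{R}^d\times\Omega\to\mathbb{R}$ is measurable and $f(x)=\mathbb{E}[F(x,\zeta)]$, with $\mathbb{E}[(F(x,\zeta)-f(x))^2]\le K$ for all $x$; $f$ is $L$-Lipschitz and Clarke regular. Fix $\lambda>0$, $x_0\in\mathcal{X}$, $y_0\in\mathbb{R}^d$, and step sizes satisfying: $\alpha(0),\beta(0)<1$; $\alpha(n)>\alpha(n+1)$, $\beta(n)>\beta(n+1)$ for all $n$; $\sum_n\alpha(n)=\sum_n\beta(n)=\infty$; $\sum_n(\alpha(n)^2+\beta(n)^2)<\infty$; $\alpha(n)/\beta(n)\to0$. Let $U_n\sim\mathcal{N}(0,I_d)$ be independent, and $\zeta^1_n,\zeta^2_n$ samples with $F(x_n\pm\lambda U_n,\zeta_n^{1,2})=f(x_n\pm\lambda U_n)+N^{1,2}_{n+1}$, $(N^i_n)$ martingale differences w.r.t. $\mathcal{G}_n=\sigma(x_m,U_m,\ m\le n;\ \zeta^1_m,\zeta^2_m,\ m<n)$ with $\mathbb{E}[(N^i_{n+1})^2\mid\mathcal{G}_n]\le K$, $U_n$ independent of $\sigma(x_m,\ m\le n;\ U_m,\zeta^1_m,\zeta^2_m,\ m<n)$. Let $\tilde g(n)=\frac{F(x_n+\lambda U_n,\zeta_n^1)-F(x_n-\lambda U_n,\zeta_n^2)}{2\lambda}U_n$, $y_{n+1}=y_n+\beta(n)(\tilde g(n)-y_n)$, $x_{n+1}=\mathcal{P}_{\mathcal{X}}(x_n-\alpha(n)y_n)$,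 $\mathcal{F}_n=\sigma(x_k:1\le k\le n)$, and $M_{n+1}=\tilde g(n)-\mathbb{E}[\tilde g(n)\mid\mathcal{F}_n]$. Then for every $T>0$, almost surely, $$\lim_{n\to\infty}\ \sup_{n\le k\le\tau^1(n,T)}\Big\|\sum_{m=n}^{k}\alpha(m)M_{m+1}\Big\|=0,\qquad\text{where }\ \tau^1(n,T)=\min\Big\{m\ge n:\ \sum_{k=n}^{m+1}\alpha(k)\ge T\Big\}.$$
   Context: $\mathcal{P}_{\mathcal{X}}$ is the Euclidean projection onto $\mathcal{X}$. Clarke regularity of $f$ means the one-sided directional derivative $f'(x;v)=\lim_{t\downarrow0}(f(x+tv)-f(x))/t$ exists for all $x,v\in\mathbb{R}^d$. *)

theory Defs
  imports "HOL-Probability.Probability"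
begin

definition clarke_regular :: "('d::real_normed_vector \<Rightarrow> real) \<Rightarrow> bool" where
  "clarke_regular f \<longleftrightarrow>
     (\<forall>x v. \<exists>l. ((\<lambda>t. (f (x + t *\<^sub>R v) - f x) / t) \<longlongrightarrow> l) (at_right 0))"

definition gen_sets :: "'a measure \<Rightarrow> ('a \<Rightarrow> 'b) \<Rightarrow> 'b measure \<Rightarrow> 'a set set" where
  "gen_sets M X N = {X -` A \<inter> space M | A. A \<in> sets N}"

definition tau1 :: "(nat \<Rightarrow> real) \<Rightarrow> nat \<Rightarrow> real \<Rightarrow> nat" where
  "tau1 \<alpha> n T = (LEAST m. n \<le> m \<and> (\<Sum>k=n..m+1. \<alpha> k) \<ge> T)"

definition std_gauss_density :: "real^'d \<Rightarrow> ennreal" where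
  "std_gauss_density v = (\<Prod>i\<in>UNIV. ennreal (std_normal_density (v $ i)))"

end

theory Submission
  imports Defs
begin

lemma norm_add_sq_le: "(norm (a + b))\<^sup>2 \<le> 2*(norm a)\<^sup>2 + 2*(norm (b::'b::real_normed_vector))\<^sup>2"
proof -
  have "norm (a+b) \<le> norm a + norm b" by (rule norm_triangle_ineq)
  then have "(norm (a+b))\<^sup>2 \<le> (norm a + norm b)\<^sup>2"
    by (simp add: power_mono)
  also have "\<dots> \<le> 2*(norm a)\<^sup>2 + 2*(norm b)\<^sup>2"
  proof -
    have "0 \<le> (norm a - norm b)\<^sup>2" by simp
    then show ?thesis by (simp add: power2_eq_square algebra_simps)
  qed
  finally show ?thesis .
qed

lemma L2_add:
  fixes f g :: "'a \<Rightarrow> 'b::{real_normed_vector, second_countable_topology}"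
  assumes "integrable M (\<lambda>\<omega>. (norm (f \<omega>))\<^sup>2)" "integrable M (\<lambda>\<omega>. (norm (g \<omega>))\<^sup>2)"
    "f \<in> borel_measurable M" "g \<in> borel_measurable M"
  shows "integrable M (\<lambda>\<omega>. (norm (f \<omega> + g \<omega>))\<^sup>2)"
proof (rule Bochner_Integration.integrable_bound)
  show "integrable M (\<lambda>\<omega>. 2*(norm (f \<omega>))\<^sup>2 + 2*(norm (g \<omega>))\<^sup>2)"
    using assms by auto
  show "(\<lambda>\<omega>. (norm (f \<omega> + g \<omega>))\<^sup>2) \<in> borel_measurable M" using assms by measurable
  show "AE x in M. norm ((norm (f x + g x))\<^sup>2) \<le> norm (2 * (norm (f x))\<^sup>2 + 2 * (norm (g x))\<^sup>2)"
  proof (intro AE_I2)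
    fix x
    have "0 \<le> 2*(norm (f x))\<^sup>2 + 2*(norm (g x))\<^sup>2" by simp
    then show "norm ((norm (f x + g x))\<^sup>2) \<le> norm (2*(norm (f x))\<^sup>2 + 2*(norm (g x))\<^sup>2)"
      using norm_add_sq_le[of "f x" "g x"] by simp
  qed
qed

lemma L2_inner:
  fixes f g :: "'a \<Rightarrow> 'b::euclidean_space"
  assumes "integrable M (\<lambda>\<omega>. (norm (f \<omega>))\<^sup>2)" "integrable M (\<lambda>\<omega>. (norm (g \<omega>))\<^sup>2)"
    "f \<in> borel_measurable M" "g \<in> borel_measurable M"
  shows "integrable M (\<lambda>\<omega>. inner (f \<omega>) (g \<omega>))"
proof (rule Bochner_Integration.integrable_bound)
  show "integrable M (\<lambda>\<omega>. (norm (f \<omega>))\<^sup>2 + (norm (g \<omega>))\<^sup>2)"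
    using assms by auto
  show "(\<lambda>\<omega>. inner (f \<omega>) (g \<omega>)) \<in> borel_measurable M" using assms by measurable
  have "\<bar>inner a b\<bar> \<le> (norm a)\<^sup>2 + (norm b)\<^sup>2" for a b :: 'b
  proof -
    have "\<bar>inner a b\<bar> \<le> norm a * norm b" by (rule Cauchy_Schwarz_ineq2)
    also have "\<dots> \<le> (norm a)\<^sup>2 + (norm b)\<^sup>2"
    proof -
      have "0 \<le> (norm a - norm b)\<^sup>2" by simp
      then have "2 * (norm a * norm b) \<le> (norm a)\<^sup>2 + (norm b)\<^sup>2" by (simp add: power2_diff)
      moreover have "0 \<le> norm a * norm b" by simp
      ultimately show ?thesis by linarith
    qed
    finally show ?thesis .
  qed
  then show "AE x in M. norm (inner (f x) (g x)) \<le> norm ((norm (f x))\<^sup>2 + (norm (g x))\<^sup>2)"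
    by auto
qed

lemma (in prob_space) kolmo_cauchy:
  fixes D :: "nat \<Rightarrow> 'a \<Rightarrow> 'b::euclidean_space" and H :: "nat \<Rightarrow> 'a measure"
  assumes sub: "\<And>j. subalgebra M (H j)"
  and DH: "\<And>m j. m < j \<Longrightarrow> D m \<in> borel_measurable (H j)"
  and DM: "\<And>m. D m \<in> borel_measurable M"
  and D2: "\<And>m. integrable M (\<lambda>\<omega>. (norm (D m \<omega>))\<^sup>2)"
  and orth: "\<And>j Z. Z \<in> borel_measurable (H j) \<Longrightarrow> integrable M (\<lambda>\<omega>. (norm (Z \<omega>))\<^sup>2) \<Longrightarrow>
       (\<integral>\<omega>. inner (Z \<omega>) (D j \<omega>) \<partial>M) = 0"
  and summ: "summable (\<lambda>m. \<integral>\<omega>. (norm (D m \<omega>))\<^sup>2 \<partial>M)"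
  shows "AE \<omega> in M. Cauchy (\<lambda>n. \<Sum>m<n. D m \<omega>)"
proof -
  define S where "S = (\<lambda>k \<omega>. \<Sum>m<k. D m \<omega>)"
  define e where "e = (\<lambda>m. \<integral>\<omega>. (norm (D m \<omega>))\<^sup>2 \<partial>M)"
  have e_nn: "0 \<le> e m" for m unfolding e_def by simp
  have SM[measurable]: "S k \<in> borel_measurable M" for k
    unfolding S_def by (intro borel_measurable_sum) (simp add: DM)
  have SH: "k \<le> j \<Longrightarrow> S k \<in> borel_measurable (H j)" for k j
    unfolding S_def by (intro borel_measurable_sum) (auto intro: DH)
  have S2: "integrable M (\<lambda>\<omega>. (norm (S k \<omega>))\<^sup>2)" for k
  proof (induction k)
    case 0 then show ?case by (simp add: S_def)
  next
    case (Suc k)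
    have "integrable M (\<lambda>\<omega>. (norm (S k \<omega> + D k \<omega>))\<^sup>2)"
      by (rule L2_add[OF Suc D2 SM DM])
    then show ?case by (simp add: S_def)
  qed
  have spH: "space (H j) = space M" for j using sub[of j] by (simp add: subalgebra_def)
  have setsH: "A \<in> sets (H j) \<Longrightarrow> A \<in> sets M" for A j using sub[of j] by (auto simp: subalgebra_def)
  have step: "(\<integral>\<omega>. indicator B \<omega> * (norm (S (Suc k) \<omega> - S n \<omega>))\<^sup>2 \<partial>M) =
      (\<integral>\<omega>. indicator B \<omega> * (norm (S k \<omega> - S n \<omega>))\<^sup>2 \<partial>M) + (\<integral>\<omega>. indicator B \<omega> * (norm (D k \<omega>))\<^sup>2 \<partial>M)"
    if B: "B \<in> sets (H k)" and nk: "n \<le> k" for B k n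
  proof -
    define Z where "Z = (\<lambda>\<omega>. indicator B \<omega> *\<^sub>R (S k \<omega> - S n \<omega>))"
    have BM: "B \<in> sets M" using setsH B .
    have ZH: "Z \<in> borel_measurable (H k)"
      unfolding Z_def using B SH[of k k] SH[OF nk] by measurable
    have ZM[measurable]: "Z \<in> borel_measurable M" using BM unfolding Z_def by measurable
    have T2: "integrable M (\<lambda>\<omega>. (norm (S k \<omega> - S n \<omega>))\<^sup>2)"
      using L2_add[OF S2[of k] _ SM, of "\<lambda>\<omega>. - S n \<omega>"] S2[of n] by simp
    have Z2: "integrable M (\<lambda>\<omega>. (norm (Z \<omega>))\<^sup>2)"
    proof (rule Bochner_Integration.integrable_bound[OF T2])
      show "(\<lambda>\<omega>. (norm (Z \<omega>))\<^sup>2) \<in> borel_measurable M" by measurable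
      show "AE x in M. norm ((norm (Z x))\<^sup>2) \<le> norm ((norm (S k x - S n x))\<^sup>2)"
        by (auto simp: Z_def indicator_def)
    qed
    have o: "(\<integral>\<omega>. inner (Z \<omega>) (D k \<omega>) \<partial>M) = 0" by (rule orth[OF ZH Z2])
    have io: "integrable M (\<lambda>\<omega>. inner (Z \<omega>) (D k \<omega>))" by (rule L2_inner[OF Z2 D2 ZM DM])
    have pw: "indicator B \<omega> * (norm (S (Suc k) \<omega> - S n \<omega>))\<^sup>2 =
        indicator B \<omega> * (norm (S k \<omega> - S n \<omega>))\<^sup>2 + 2 * inner (Z \<omega>) (D k \<omega>) + indicator B \<omega> * (norm (D k \<omega>))\<^sup>2" for \<omega>
      by (cases "\<omega> \<in> B") (simp_all add: Z_def S_def power2_norm_eq_inner inner_add inner_diff inner_commute algebra_simps)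
    have i1: "integrable M (\<lambda>\<omega>. indicator B \<omega> * (norm (S k \<omega> - S n \<omega>))\<^sup>2)"
      using integrable_real_mult_indicator[OF BM T2] by (simp add: mult.commute)
    have i2: "integrable M (\<lambda>\<omega>. indicator B \<omega> * (norm (D k \<omega>))\<^sup>2)"
      using integrable_real_mult_indicator[OF BM D2] by (simp add: mult.commute)
    show ?thesis
      unfolding pw using i1 i2 io o by simp
  qed
  have energy: "(\<integral>\<omega>. (norm (S k \<omega> - S n \<omega>))\<^sup>2 \<partial>M) = (\<Sum>m\<in>{n..<k}. e m)" if "n \<le> k" for n k
    using that
  proof (induction k rule: nat_induct_at_least)
    case base then show ?case by simp
  next
    case (Suc k)
    have sp: "space M \<in> sets (H k)" using sets.top[of "H k"] spH by simp
    have "(\<integral>\<omega>. indicator (space M) \<omega> * f \<omega> \<partial>M) = (\<integral>\<omega>. f \<omega> \<partial>M)" for f :: "'a \<Rightarrow> real"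
      by (rule Bochner_Integration.integral_cong) auto
    then have "(\<integral>\<omega>. (norm (S (Suc k) \<omega> - S n \<omega>))\<^sup>2 \<partial>M) = (\<integral>\<omega>. (norm (S k \<omega> - S n \<omega>))\<^sup>2 \<partial>M) + e k"
      using step[OF sp Suc(1)] by (simp add: e_def)
    then show ?case using Suc(2) sum.atLeastLessThan_Suc[OF Suc(1), of e] by simp
  qed
  define tl where "tl = (\<lambda>n. suminf e - (\<Sum>m<n. e m))"
  have summ': "summable e" using summ unfolding e_def .
  have tl_bound: "(\<Sum>m\<in>{n..<k}. e m) \<le> tl n" if "n \<le> k" for n k
  proof -
    have "(\<Sum>m<k. e m) \<le> suminf e" by (rule sum_le_suminf[OF summ']) (auto simp: e_nn)
    moreover have "(\<Sum>m<k. e m) = (\<Sum>m<n. e m) + (\<Sum>m\<in>{n..<k}. e m)"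
      using that by (metis atLeast0LessThan sum.atLeastLessThan_concat zero_le)
    ultimately show ?thesis unfolding tl_def by simp
  qed
  have tl_lim: "tl \<longlonglongrightarrow> 0"
  proof -
    have "(\<lambda>n. suminf e - (\<Sum>m<n. e m)) \<longlonglongrightarrow> suminf e - suminf e"
      by (intro tendsto_intros summable_LIMSEQ[OF summ'])
    then show ?thesis unfolding tl_def by simp
  qed
  have maxi: "measure M {\<omega>\<in>space M. \<exists>i\<ge>n. \<epsilon> \<le> norm (S i \<omega> - S n \<omega>)} \<le> tl n / \<epsilon>\<^sup>2"
    if eps: "\<epsilon> > 0" for n \<epsilon>
  proof -
    define B where "B = (\<lambda>k. {\<omega>\<in>space M. \<exists>i\<in>{n..k}. \<epsilon> \<le> norm (S i \<omega> - S n \<omega>)})"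
    have BH: "B k \<in> sets (H k)" if "n \<le> k" for k
    proof -
      have "B k = (\<Union>i\<in>{n..k}. {\<omega>\<in>space (H k). \<epsilon> \<le> norm (S i \<omega> - S n \<omega>)})"
        unfolding B_def spH by auto
      also have "\<dots> \<in> sets (H k)"
      proof (intro sets.finite_UN)
        fix i assume "i \<in> {n..k}"
        then have [measurable]: "S i \<in> borel_measurable (H k)" "S n \<in> borel_measurable (H k)"
          using SH that by auto
        show "{\<omega>\<in>space (H k). \<epsilon> \<le> norm (S i \<omega> - S n \<omega>)} \<in> sets (H k)" by measurable
      qed auto
      finally show ?thesis .
    qed
    have BM: "B k \<in> sets M" for k unfolding B_def by measurable
    have mx: "\<epsilon>\<^sup>2 * measure M (B k) \<le> (\<integral>\<omega>. indicator (B k) \<omega> * (norm (S k \<omega> - S n \<omega>))\<^sup>2 \<partial>M)"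
      if "n \<le> k" for k
      using that
    proof (induction k rule: nat_induct_at_least)
      case base
      have "B n = {}" unfolding B_def using eps by auto
      then show ?case by simp
    next
      case (Suc k)
      define C where "C = B (Suc k) - B k"
      have BC: "B (Suc k) = B k \<union> C" unfolding C_def B_def by auto
      have CM: "C \<in> sets M" unfolding C_def using BM by auto
      have T2: "integrable M (\<lambda>\<omega>. (norm (S (Suc k) \<omega> - S n \<omega>))\<^sup>2)"
        using L2_add[OF S2[of "Suc k"] _ SM, of "\<lambda>\<omega>. - S n \<omega>"] S2[of n] by simp
      have iB: "integrable M (\<lambda>\<omega>. indicator (B k) \<omega> * (norm (S (Suc k) \<omega> - S n \<omega>))\<^sup>2)"
        using integrable_real_mult_indicator[OF BM T2] by (simp add: mult.commute)
      have iC: "integrable M (\<lambda>\<omega>. indicator C \<omega> * (norm (S (Suc k) \<omega> - S n \<omega>))\<^sup>2)"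
        using integrable_real_mult_indicator[OF CM T2] by (simp add: mult.commute)
      have split: "(\<integral>\<omega>. indicator (B (Suc k)) \<omega> * (norm (S (Suc k) \<omega> - S n \<omega>))\<^sup>2 \<partial>M) =
         (\<integral>\<omega>. indicator (B k) \<omega> * (norm (S (Suc k) \<omega> - S n \<omega>))\<^sup>2 \<partial>M) +
         (\<integral>\<omega>. indicator C \<omega> * (norm (S (Suc k) \<omega> - S n \<omega>))\<^sup>2 \<partial>M)"
      proof -
        have "\<And>\<omega>. indicator (B (Suc k)) \<omega> * (norm (S (Suc k) \<omega> - S n \<omega>))\<^sup>2 =
           indicator (B k) \<omega> * (norm (S (Suc k) \<omega> - S n \<omega>))\<^sup>2 + indicator C \<omega> * (norm (S (Suc k) \<omega> - S n \<omega>))\<^sup>2"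
        proof -
          have sub: "B k \<subseteq> B (Suc k)" unfolding B_def by auto
          fix \<omega> show "indicator (B (Suc k)) \<omega> * (norm (S (Suc k) \<omega> - S n \<omega>))\<^sup>2 =
           indicator (B k) \<omega> * (norm (S (Suc k) \<omega> - S n \<omega>))\<^sup>2 + indicator C \<omega> * (norm (S (Suc k) \<omega> - S n \<omega>))\<^sup>2"
            unfolding C_def using sub by (auto simp: indicator_def)
        qed
        then show ?thesis using iB iC by simp
      qed
      have a1: "(\<integral>\<omega>. indicator (B k) \<omega> * (norm (S k \<omega> - S n \<omega>))\<^sup>2 \<partial>M) \<le>
                (\<integral>\<omega>. indicator (B k) \<omega> * (norm (S (Suc k) \<omega> - S n \<omega>))\<^sup>2 \<partial>M)"
        using step[OF BH[OF Suc(1)] Suc(1)]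
        by (simp add: integral_nonneg)
      have a2: "\<epsilon>\<^sup>2 * measure M C \<le> (\<integral>\<omega>. indicator C \<omega> * (norm (S (Suc k) \<omega> - S n \<omega>))\<^sup>2 \<partial>M)"
      proof -
        have "\<epsilon>\<^sup>2 * measure M C = (\<integral>\<omega>. indicator C \<omega> * \<epsilon>\<^sup>2 \<partial>M)"
          using CM by simp
        also have "\<dots> \<le> (\<integral>\<omega>. indicator C \<omega> * (norm (S (Suc k) \<omega> - S n \<omega>))\<^sup>2 \<partial>M)"
        proof (rule integral_mono[OF _ iC])
          show "integrable M (\<lambda>\<omega>. indicator C \<omega> * \<epsilon>\<^sup>2)" using integrable_real_mult_indicator[OF CM, of "\<lambda>_. \<epsilon>\<^sup>2"] by (simp add: mult.commute)
          fix \<omega> assume "\<omega> \<in> space M"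
          show "indicator C \<omega> * \<epsilon>\<^sup>2 \<le> indicator C \<omega> * (norm (S (Suc k) \<omega> - S n \<omega>))\<^sup>2"
          proof (cases "\<omega> \<in> C")
            case True
            then have "\<epsilon> \<le> norm (S (Suc k) \<omega> - S n \<omega>)"
              unfolding C_def B_def using Suc(1) by (auto simp: le_Suc_eq)
            then show ?thesis using True eps by (simp add: power_mono)
          qed simp
        qed
        finally show ?thesis .
      qed
      have "measure M (B (Suc k)) = measure M (B k) + measure M C"
        unfolding BC by (rule finite_measure_Union) (auto simp: BM CM C_def)
      then show ?case using Suc(2) a1 a2 split by (simp add: distrib_left)
    qed
    have mB: "measure M (B k) \<le> tl n / \<epsilon>\<^sup>2" if "n \<le> k" for k
    proof -
      have "(\<integral>\<omega>. indicator (B k) \<omega> * (norm (S k \<omega> - S n \<omega>))\<^sup>2 \<partial>M) \<le> (\<integral>\<omega>. (norm (S k \<omega> - S n \<omega>))\<^sup>2 \<partial>M)"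
      proof (rule integral_mono)
        have i: "integrable M (\<lambda>\<omega>. (norm (S k \<omega> - S n \<omega>))\<^sup>2)"
          using L2_add[OF S2[of k] _ SM, of "\<lambda>\<omega>. - S n \<omega>"] S2[of n] by simp
        then show "integrable M (\<lambda>\<omega>. (norm (S k \<omega> - S n \<omega>))\<^sup>2)" .
        show "integrable M (\<lambda>\<omega>. indicator (B k) \<omega> * (norm (S k \<omega> - S n \<omega>))\<^sup>2)"
          using integrable_real_mult_indicator[OF BM[of k] i] by (simp add: mult.commute)
      qed (auto simp: indicator_def)
      also have "\<dots> \<le> tl n" using energy[OF that] tl_bound[OF that] by simp
      finally have "\<epsilon>\<^sup>2 * measure M (B k) \<le> tl n" using mx[OF that] by simp
      then show ?thesis using eps by (simp add: field_simps)
    qed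
    have inc: "incseq (\<lambda>k. B (n + k))"
      unfolding incseq_def B_def by auto
    have lim: "(\<lambda>k. measure M (B (n + k))) \<longlonglongrightarrow> measure M (\<Union>k. B (n + k))"
      by (rule finite_Lim_measure_incseq[OF _ inc]) (auto simp: BM)
    have "measure M (\<Union>k. B (n + k)) \<le> tl n / \<epsilon>\<^sup>2"
      by (rule LIMSEQ_le_const2[OF lim]) (intro exI[of _ 0] allI impI mB, simp)
    moreover have "(\<Union>k. B (n + k)) = {\<omega>\<in>space M. \<exists>i\<ge>n. \<epsilon> \<le> norm (S i \<omega> - S n \<omega>)}"
    proof (intro equalityI subsetI)
      fix \<omega> assume "\<omega> \<in> (\<Union>k. B (n + k))"
      then show "\<omega> \<in> {\<omega>\<in>space M. \<exists>i\<ge>n. \<epsilon> \<le> norm (S i \<omega> - S n \<omega>)}"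
        unfolding B_def by auto
    next
      fix \<omega> assume "\<omega> \<in> {\<omega>\<in>space M. \<exists>i\<ge>n. \<epsilon> \<le> norm (S i \<omega> - S n \<omega>)}"
      then obtain i where i: "\<omega> \<in> space M" "n \<le> i" "\<epsilon> \<le> norm (S i \<omega> - S n \<omega>)" by auto
      then have "\<omega> \<in> B (n + (i - n))" unfolding B_def by auto
      then show "\<omega> \<in> (\<Union>k. B (n + k))" by blast
    qed
    ultimately show ?thesis by simp
  qed
  define Bad where "Bad = (\<lambda>r::nat. {\<omega>\<in>space M. \<forall>n. \<exists>i\<ge>n. 1/(real r+1) \<le> norm (S i \<omega> - S n \<omega>)})"
  have Bad_null: "Bad r \<in> null_sets M" for r
  proof -
    have BadM: "Bad r \<in> sets M" unfolding Bad_def by measurable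
    have le: "measure M (Bad r) \<le> tl n / (1/(real r+1))\<^sup>2" for n
    proof -
      have "measure M (Bad r) \<le> measure M {\<omega>\<in>space M. \<exists>i\<ge>n. 1/(real r+1) \<le> norm (S i \<omega> - S n \<omega>)}"
        by (rule finite_measure_mono) (auto simp: Bad_def)
      also have "\<dots> \<le> tl n / (1/(real r+1))\<^sup>2" by (rule maxi) simp
      finally show ?thesis .
    qed
    have lim0: "(\<lambda>n. tl n / (1/(real r+1))\<^sup>2) \<longlonglongrightarrow> 0 / (1/(real r+1))\<^sup>2"
      by (intro tendsto_intros tl_lim) simp
    have "measure M (Bad r) \<le> 0 / (1/(real r+1))\<^sup>2"
      by (rule LIMSEQ_le_const[OF lim0]) (intro exI[of _ 0] allI impI le)
    then have "measure M (Bad r) \<le> 0" by simp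
    then have "measure M (Bad r) = 0" using measure_nonneg[of M "Bad r"] by linarith
    then show ?thesis using BadM by (simp add: null_sets_def emeasure_eq_measure)
  qed
  show ?thesis
  proof (rule AE_I')
    show "(\<Union>r. Bad r) \<in> null_sets M" using Bad_null by (rule null_sets_UN)
    show "{\<omega> \<in> space M. \<not> Cauchy (\<lambda>n. \<Sum>m<n. D m \<omega>)} \<subseteq> (\<Union>r. Bad r)"
    proof
      fix \<omega> assume w: "\<omega> \<in> {\<omega> \<in> space M. \<not> Cauchy (\<lambda>n. \<Sum>m<n. D m \<omega>)}"
      show "\<omega> \<in> (\<Union>r. Bad r)"
      proof (rule ccontr)
        assume "\<omega> \<notin> (\<Union>r. Bad r)"
        then have good: "\<exists>n. \<forall>i\<ge>n. norm (S i \<omega> - S n \<omega>) < 1/(real r+1)" for r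
          using w unfolding Bad_def by (auto simp: not_le) (meson not_less)
        have "Cauchy (\<lambda>n. S n \<omega>)"
        proof (rule CauchyI)
          fix \<delta> :: real assume "0 < \<delta>"
          then obtain r where r: "r \<noteq> 0" "inverse (real r) < \<delta>/2"
            using real_arch_inverse[of "\<delta>/2"] by auto
          have "1/(real r+1) < 1/real r"
            by (rule divide_strict_left_mono) (use r(1) in auto)
          then have r': "1/(real r+1) < \<delta>/2" using r(2) by (simp add: inverse_eq_divide)
          obtain n where n: "\<forall>i\<ge>n. norm (S i \<omega> - S n \<omega>) < 1/(real r+1)" using good by blast
          show "\<exists>N. \<forall>m\<ge>N. \<forall>l\<ge>N. norm (S m \<omega> - S l \<omega>) < \<delta>"
          proof (intro exI allI impI)
            fix m l assume "n \<le> m" "n \<le> l"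
            then have "norm (S m \<omega> - S n \<omega>) < \<delta>/2" "norm (S l \<omega> - S n \<omega>) < \<delta>/2"
              using n r' by force+
            then show "norm (S m \<omega> - S l \<omega>) < \<delta>"
              using norm_triangle_ineq4[of "S m \<omega> - S n \<omega>" "S l \<omega> - S n \<omega>"] by simp
          qed
        qed
        then show False using w unfolding S_def by simp
      qed
    qed
  qed
qed



lemma vec_nth_meas[measurable]: "(\<lambda>x::real^'n. x $ i) \<in> borel_measurable borel"
proof -
  have "(\<lambda>x::real^'n. x $ i) = (\<lambda>x. x \<bullet> axis i 1)" by (simp add: inner_axis)
  then show ?thesis by simp
qed

lemma vec_lambda_meas:
  fixes c :: "'n::finite \<Rightarrow> 'a \<Rightarrow> real"
  assumes "\<And>i. c i \<in> borel_measurable N"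
  shows "(\<lambda>\<omega>. \<chi> i. c i \<omega>) \<in> borel_measurable N"
proof (subst borel_measurable_euclidean_space, intro ballI)
  fix b :: "real^'n" assume "b \<in> Basis"
  then obtain i where b: "b = axis i 1" by (auto simp: Basis_vec_def)
  show "(\<lambda>\<omega>. (\<chi> i. c i \<omega>) \<bullet> b) \<in> borel_measurable N"
    unfolding b by (simp add: inner_axis assms)
qed

lemma gen_sub: "X \<in> measurable M N \<Longrightarrow> gen_sets M X N \<subseteq> sets M"
  by (auto simp: gen_sets_def measurable_sets)

lemma gen_Pow: "gen_sets M X N \<subseteq> Pow (space M)"
  by (auto simp: gen_sets_def)

lemma meas_sigma:
  assumes "X \<in> measurable M N" "gen_sets M X N \<subseteq> A" "A \<subseteq> Pow (space M)"
  shows "X \<in> measurable (sigma (space M) A) N"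
proof (rule measurableI)
  fix \<omega> assume "\<omega> \<in> space (sigma (space M) A)"
  then have "\<omega> \<in> space M" using assms(3) by (simp add: space_measure_of)
  then show "X \<omega> \<in> space N" using assms(1) by (auto simp: measurable_def)
next
  fix B assume "B \<in> sets N"
  then have "X -` B \<inter> space M \<in> A" using assms(2) by (auto simp: gen_sets_def)
  then show "X -` B \<inter> space (sigma (space M) A) \<in> sets (sigma (space M) A)"
    using assms(3) by (simp add: space_measure_of sets_measure_of)
qed

lemma subalg_sigma:
  assumes "A \<subseteq> sets M" shows "subalgebra M (sigma (space M) A)"
proof -
  have P: "A \<subseteq> Pow (space M)" using assms sets.sets_into_space by blast
  show ?thesis unfolding subalgebra_def
    using P assms by (simp add: space_measure_of sets_measure_of sets.sigma_sets_subset)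
qed

lemma sigma_mono_subalg:
  assumes "A \<subseteq> B" "B \<subseteq> Pow \<Omega>" shows "subalgebra (sigma \<Omega> B) (sigma \<Omega> A)"
proof -
  have "A \<subseteq> Pow \<Omega>" using assms by blast
  then show ?thesis unfolding subalgebra_def
    using assms by (simp add: space_measure_of sets_measure_of sigma_sets_mono')
qed

locale setting =
  fixes M :: "'a measure" and \<mu> :: "'z measure"
    and X :: "(real^'d) set"
    and F :: "real^'d \<Rightarrow> 'z \<Rightarrow> real" and f :: "real^'d \<Rightarrow> real"
    and K L lam :: real
    and x0 y0 :: "real^'d"
    and \<alpha> \<beta> :: "nat \<Rightarrow> real"
    and U x y :: "nat \<Rightarrow> 'a \<Rightarrow> real^'d"
    and \<zeta>1 \<zeta>2 :: "nat \<Rightarrow> 'a \<Rightarrow> 'z"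
    and N1 N2 :: "nat \<Rightarrow> 'a \<Rightarrow> real"
    and g Mart :: "nat \<Rightarrow> 'a \<Rightarrow> real^'d"
    and G Fs :: "nat \<Rightarrow> 'a measure"
  assumes M: "prob_space M" and mu: "prob_space \<mu>"
    and X: "X \<noteq> {}" "compact X" "convex X"
    and F_meas: "(\<lambda>(v, z). F v z) \<in> borel_measurable (borel \<Otimes>\<^sub>M \<mu>)"
    and F_int: "\<And>v. integrable \<mu> (F v)"
    and f_def: "\<And>v. f v = (\<integral>z. F v z \<partial>\<mu>)"
    and F_var: "\<And>v. integrable \<mu> (\<lambda>z. (F v z - f v)\<^sup>2) \<and> (\<integral>z. (F v z - f v)\<^sup>2 \<partial>\<mu>) \<le> K"
    and f_lip: "L-lipschitz_on UNIV f"
    and f_clarke: "clarke_regular f"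
    and lam: "lam > 0"
    and x0: "x0 \<in> X"
    and step0: "\<alpha> 0 < 1" "\<beta> 0 < 1"
    and step_dec: "\<And>n. \<alpha> n > \<alpha> (Suc n)" "\<And>n. \<beta> n > \<beta> (Suc n)"
    and step_div: "filterlim (\<lambda>n. \<Sum>i<n. \<alpha> i) at_top sequentially"
                  "filterlim (\<lambda>n. \<Sum>i<n. \<beta> i) at_top sequentially"
    and step_sq: "summable (\<lambda>n. (\<alpha> n)\<^sup>2 + (\<beta> n)\<^sup>2)"
    and step_ratio: "(\<lambda>n. \<alpha> n / \<beta> n) \<longlonglongrightarrow> 0"
    and U_meas: "\<And>n. U n \<in> borel_measurable M"
    and U_gauss: "\<And>n. distributed M lborel (U n) std_gauss_density"
    and U_indep: "prob_space.indep_vars M (\<lambda>_. borel) U UNIV"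
    and zeta_meas: "\<And>n. \<zeta>1 n \<in> measurable M \<mu>" "\<And>n. \<zeta>2 n \<in> measurable M \<mu>"
    and G_def: "\<And>n. G n = sigma (space M)
          ((\<Union>m\<in>{..n}. gen_sets M (x m) borel \<union> gen_sets M (U m) borel)
           \<union> (\<Union>m\<in>{..<n}. gen_sets M (\<zeta>1 m) \<mu> \<union> gen_sets M (\<zeta>2 m) \<mu>))"
    and N1_def: "\<And>n \<omega>. N1 (Suc n) \<omega> =
          F (x n \<omega> + lam *\<^sub>R U n \<omega>) (\<zeta>1 n \<omega>) - f (x n \<omega> + lam *\<^sub>R U n \<omega>)"
    and N2_def: "\<And>n \<omega>. N2 (Suc n) \<omega> =
          F (x n \<omega> - lam *\<^sub>R U n \<omega>) (\<zeta>2 n \<omega>) - f (x n \<omega> - lam *\<^sub>R U n \<omega>)"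
    and N1_mds: "\<And>n. integrable M (N1 (Suc n)) \<and> integrable M (\<lambda>\<omega>. (N1 (Suc n) \<omega>)\<^sup>2)
          \<and> (AE \<omega> in M. real_cond_exp M (G n) (N1 (Suc n)) \<omega> = 0)
          \<and> (AE \<omega> in M. real_cond_exp M (G n) (\<lambda>\<omega>. (N1 (Suc n) \<omega>)\<^sup>2) \<omega> \<le> K)"
    and N2_mds: "\<And>n. integrable M (N2 (Suc n)) \<and> integrable M (\<lambda>\<omega>. (N2 (Suc n) \<omega>)\<^sup>2)
          \<and> (AE \<omega> in M. real_cond_exp M (G n) (N2 (Suc n)) \<omega> = 0)
          \<and> (AE \<omega> in M. real_cond_exp M (G n) (\<lambda>\<omega>. (N2 (Suc n) \<omega>)\<^sup>2) \<omega> \<le> K)"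
    and U_indep_past: "\<And>n. prob_space.indep_set M
          (sigma_sets (space M) (gen_sets M (U n) borel))
          (sigma_sets (space M)
             ((\<Union>m\<in>{..n}. gen_sets M (x m) borel)
              \<union> (\<Union>m\<in>{..<n}. gen_sets M (U m) borel \<union> gen_sets M (\<zeta>1 m) \<mu> \<union> gen_sets M (\<zeta>2 m) \<mu>)))"
    and g_def: "\<And>n \<omega>. g n \<omega> =
          ((F (x n \<omega> + lam *\<^sub>R U n \<omega>) (\<zeta>1 n \<omega>) - F (x n \<omega> - lam *\<^sub>R U n \<omega>) (\<zeta>2 n \<omega>)) / (2 * lam))
          *\<^sub>R U n \<omega>"
    and y_init: "\<And>\<omega>. y 0 \<omega> = y0"
    and y_rec: "\<And>n \<omega>. y (Suc n) \<omega> = y n \<omega> + \<beta> n *\<^sub>R (g n \<omega> - y n \<omega>)"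
    and x_init: "\<And>\<omega>. x 0 \<omega> = x0"
    and x_rec: "\<And>n \<omega>. x (Suc n) \<omega> = closest_point X (x n \<omega> - \<alpha> n *\<^sub>R y n \<omega>)"
    and Fs_def: "\<And>n. Fs n = sigma (space M) (\<Union>k\<in>{1..n}. gen_sets M (x k) borel)"
    and Mart_def: "\<And>n \<omega>. Mart (Suc n) \<omega> =
          g n \<omega> - (\<chi> i. real_cond_exp M (Fs n) (\<lambda>\<omega>'. g n \<omega>' $ i) \<omega>)"

begin

definition Hg where "Hg j = (\<Union>m\<in>{..j}. gen_sets M (x m) borel)
              \<union> (\<Union>m\<in>{..<j}. gen_sets M (U m) borel \<union> gen_sets M (\<zeta>1 m) \<mu> \<union> gen_sets M (\<zeta>2 m) \<mu>)"
definition H where "H j = sigma (space M) (Hg j)"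
definition Gg where "Gg j = (\<Union>m\<in>{..j}. gen_sets M (x m) borel \<union> gen_sets M (U m) borel)
           \<union> (\<Union>m\<in>{..<j}. gen_sets M (\<zeta>1 m) \<mu> \<union> gen_sets M (\<zeta>2 m) \<mu>)"
definition Fg where "Fg j = (\<Union>k\<in>{1..j}. gen_sets M (x k) borel)"

lemma G_eq: "G j = sigma (space M) (Gg j)" unfolding G_def Gg_def ..
lemma Fs_eq: "Fs j = sigma (space M) (Fg j)" unfolding Fs_def Fg_def ..

lemma f_meas[measurable]: "f \<in> borel_measurable borel"
  by (rule borel_measurable_continuous_onI) (rule lipschitz_on_continuous_on[OF f_lip])

lemma cp_meas[measurable]: "closest_point X \<in> borel_measurable borel"
  by (rule borel_measurable_continuous_onI)
     (rule continuous_on_closest_point[OF X(3) compact_imp_closed[OF X(2)] X(1)])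

lemma Fcomp:
  assumes "v \<in> borel_measurable N" "z \<in> measurable N \<mu>"
  shows "(\<lambda>\<omega>. F (v \<omega>) (z \<omega>)) \<in> borel_measurable N"
proof -
  have "(\<lambda>\<omega>. (v \<omega>, z \<omega>)) \<in> measurable N (borel \<Otimes>\<^sub>M \<mu>)"
    by (rule measurable_Pair) (fact assms)+
  from measurable_compose[OF this F_meas] show ?thesis by simp
qed

lemma g_eq: "g n = (\<lambda>\<omega>. ((F (x n \<omega> + lam *\<^sub>R U n \<omega>) (\<zeta>1 n \<omega>) - F (x n \<omega> - lam *\<^sub>R U n \<omega>) (\<zeta>2 n \<omega>)) / (2 * lam))
          *\<^sub>R U n \<omega>)"
  using g_def by auto

lemma g_meas_gen:
  assumes [measurable]: "x n \<in> borel_measurable N" "U n \<in> borel_measurable N"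
    and z: "\<zeta>1 n \<in> measurable N \<mu>" "\<zeta>2 n \<in> measurable N \<mu>"
  shows "g n \<in> borel_measurable N"
proof -
  have [measurable]: "(\<lambda>\<omega>. F (x n \<omega> + lam *\<^sub>R U n \<omega>) (\<zeta>1 n \<omega>)) \<in> borel_measurable N"
    by (rule Fcomp[OF _ z(1)]) measurable
  have [measurable]: "(\<lambda>\<omega>. F (x n \<omega> - lam *\<^sub>R U n \<omega>) (\<zeta>2 n \<omega>)) \<in> borel_measurable N"
    by (rule Fcomp[OF _ z(2)]) measurable
  show ?thesis unfolding g_eq by measurable
qed

lemma xy_meas: "x n \<in> borel_measurable M \<and> y n \<in> borel_measurable M"
proof (induction n)
  case 0
  have "x 0 = (\<lambda>_. x0)" "y 0 = (\<lambda>_. y0)" using x_init y_init by auto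
  then show ?case by simp
next
  case (Suc n)
  then have [measurable]: "x n \<in> borel_measurable M" "y n \<in> borel_measurable M" by auto
  have [measurable]: "g n \<in> borel_measurable M"
    by (rule g_meas_gen) (auto simp: U_meas zeta_meas)
  have "x (Suc n) = (\<lambda>\<omega>. closest_point X (x n \<omega> - \<alpha> n *\<^sub>R y n \<omega>))"
       "y (Suc n) = (\<lambda>\<omega>. y n \<omega> + \<beta> n *\<^sub>R (g n \<omega> - y n \<omega>))" using x_rec y_rec by auto
  then show ?case by simp
qed

lemma x_meas[measurable]: "x n \<in> borel_measurable M" and y_meas[measurable]: "y n \<in> borel_measurable M"
  using xy_meas by auto

lemma g_meas[measurable]: "g n \<in> borel_measurable M"
  by (rule g_meas_gen) (auto simp: U_meas zeta_meas)

lemma Hg_sets: "Hg j \<subseteq> sets M"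
  unfolding Hg_def using gen_sub[OF x_meas] gen_sub[OF U_meas] gen_sub[OF zeta_meas(1)] gen_sub[OF zeta_meas(2)]
  by blast

lemma Gg_sets: "Gg j \<subseteq> sets M"
  unfolding Gg_def using gen_sub[OF x_meas] gen_sub[OF U_meas] gen_sub[OF zeta_meas(1)] gen_sub[OF zeta_meas(2)]
  by blast

lemma Fg_sets: "Fg j \<subseteq> sets M"
  unfolding Fg_def using gen_sub[OF x_meas] by blast

lemma Hg_Pow: "Hg j \<subseteq> Pow (space M)" using Hg_sets sets.sets_into_space by blast
lemma Gg_Pow: "Gg j \<subseteq> Pow (space M)" using Gg_sets sets.sets_into_space by blast
lemma Fg_Pow: "Fg j \<subseteq> Pow (space M)" using Fg_sets sets.sets_into_space by blast

lemma sub_H: "subalgebra M (H j)" unfolding H_def by (rule subalg_sigma[OF Hg_sets])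
lemma sub_G: "subalgebra M (G j)" unfolding G_eq by (rule subalg_sigma[OF Gg_sets])
lemma sub_Fs: "subalgebra M (Fs j)" unfolding Fs_eq by (rule subalg_sigma[OF Fg_sets])

lemma H_G: "subalgebra (G j) (H j)"
  unfolding H_def G_eq by (rule sigma_mono_subalg[OF _ Gg_Pow]) (auto simp: Hg_def Gg_def)

lemma Fs_H: "m \<le> j \<Longrightarrow> subalgebra (H j) (Fs m)"
  unfolding H_def Fs_eq by (rule sigma_mono_subalg[OF _ Hg_Pow]) (auto simp: Hg_def Fg_def)

lemma x_H: "m \<le> j \<Longrightarrow> x m \<in> borel_measurable (H j)"
  unfolding H_def by (rule meas_sigma[OF x_meas _ Hg_Pow]) (auto simp: Hg_def)
lemma U_H: "m < j \<Longrightarrow> U m \<in> borel_measurable (H j)"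
  unfolding H_def by (rule meas_sigma[OF U_meas _ Hg_Pow]) (auto simp: Hg_def)
lemma z1_H: "m < j \<Longrightarrow> \<zeta>1 m \<in> measurable (H j) \<mu>"
  unfolding H_def by (rule meas_sigma[OF zeta_meas(1) _ Hg_Pow]) (auto simp: Hg_def)
lemma z2_H: "m < j \<Longrightarrow> \<zeta>2 m \<in> measurable (H j) \<mu>"
  unfolding H_def by (rule meas_sigma[OF zeta_meas(2) _ Hg_Pow]) (auto simp: Hg_def)
lemma U_G: "U j \<in> borel_measurable (G j)"
  unfolding G_eq by (rule meas_sigma[OF U_meas _ Gg_Pow]) (auto simp: Gg_def)
lemma x_Fs: "1 \<le> j \<Longrightarrow> x j \<in> borel_measurable (Fs j)"
  unfolding Fs_eq by (rule meas_sigma[OF x_meas _ Fg_Pow]) (auto simp: Fg_def)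

lemma g_H: "m < j \<Longrightarrow> g m \<in> borel_measurable (H j)"
  by (rule g_meas_gen) (auto intro: x_H U_H z1_H z2_H)

end



definition Gam :: "(real^'d) measure" where "Gam = density lborel std_gauss_density"
definition C4 :: "nat \<Rightarrow> real" where "C4 n = 64 * (sqrt 2)^n"
definition C2 :: "nat \<Rightarrow> real" where "C2 n = 1 + C4 n"

context setting begin

lemma sgd_meas[measurable]: "(std_gauss_density :: real^'d \<Rightarrow> ennreal) \<in> borel_measurable borel"
  unfolding std_gauss_density_def by measurable

lemma U_distr: "distr M lborel (U n) = Gam"
  using distributed_distr_eq_density[OF U_gauss[of n]] by (simp add: Gam_def)

lemma U_meas_lborel: "U n \<in> measurable M lborel" using U_meas by simp

lemma prob_Gam: "prob_space (Gam :: (real^'d) measure)"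
  using prob_space.prob_space_distr[OF M U_meas_lborel[of 0]] U_distr by simp

lemma sets_Gam[measurable_cong]: "sets (Gam :: (real^'d) measure) = sets borel" by (simp add: Gam_def)
lemma space_Gam: "space (Gam :: (real^'d) measure) = UNIV" by (simp add: Gam_def)

lemma U_nn:
  assumes [measurable]: "h \<in> borel_measurable borel"
  shows "(\<integral>\<^sup>+\<omega>. h (U n \<omega>) \<partial>M) = integral\<^sup>N Gam h"
proof -
  have "integral\<^sup>N Gam h = integral\<^sup>N (distr M lborel (U n)) h" by (simp add: U_distr)
  also have "\<dots> = (\<integral>\<^sup>+\<omega>. h (U n \<omega>) \<partial>M)"
    by (rule nn_integral_distr) (auto simp: U_meas)
  finally show ?thesis ..
qed

lemma U_int:
  fixes h :: "real^'d \<Rightarrow> real"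
  assumes [measurable]: "h \<in> borel_measurable borel"
  shows "(\<integral>\<omega>. h (U n \<omega>) \<partial>M) = integral\<^sup>L Gam h"
proof -
  have "integral\<^sup>L Gam h = integral\<^sup>L (distr M lborel (U n)) h" by (simp add: U_distr)
  also have "\<dots> = (\<integral>\<omega>. h (U n \<omega>) \<partial>M)"
    by (rule integral_distr) (auto simp: U_meas)
  finally show ?thesis ..
qed

lemma U_integrable:
  fixes h :: "real^'d \<Rightarrow> real"
  assumes [measurable]: "h \<in> borel_measurable borel"
  shows "integrable M (\<lambda>\<omega>. h (U n \<omega>)) \<longleftrightarrow> integrable Gam h"
proof -
  have "integrable Gam h \<longleftrightarrow> integrable (distr M lborel (U n)) h" by (simp add: U_distr)
  also have "\<dots> \<longleftrightarrow> integrable M (\<lambda>\<omega>. h (U n \<omega>))"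
    by (rule integrable_distr_eq) (auto simp: U_meas)
  finally show ?thesis ..
qed

lemma exp_quartic: "s\<^sup>2 * exp (- s / 4) \<le> 64" if "0 \<le> s" for s :: real
proof -
  have "1 + s/8 \<le> exp (s/8)" by (rule exp_ge_add_one_self)
  then have "s/8 \<le> exp (s/8)" by linarith
  then have "(s/8)\<^sup>2 \<le> (exp (s/8))\<^sup>2" using that by (intro power_mono) auto
  also have "(exp (s/8))\<^sup>2 = exp (s/4)" by (simp add: power2_eq_square exp_add[symmetric])
  finally have "s\<^sup>2 \<le> 64 * exp (s/4)" by (simp add: power_divide)
  then have "s\<^sup>2 / exp (s/4) \<le> 64" by (simp add: divide_le_eq)
  then show ?thesis by (simp add: exp_minus field_simps)
qed

lemma gauss_pt:
  fixes u :: "real^'d"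
  shows "std_gauss_density u * ennreal ((norm u)^4) \<le> 64 * std_gauss_density ((1/sqrt 2) *\<^sub>R u)"
proof -
  have nn: "\<And>t. 0 \<le> std_normal_density t" by (simp add: normal_density_nonneg)
  have sgd_real: "std_gauss_density v = ennreal (\<Prod>i\<in>UNIV. std_normal_density (v$i))" for v :: "real^'d"
    unfolding std_gauss_density_def by (rule prod_ennreal) (simp add: nn)
  have split: "std_normal_density t = std_normal_density (t / sqrt 2) * exp (- t\<^sup>2/4)" for t
  proof -
    have "(t / sqrt 2)\<^sup>2 = t\<^sup>2 / 2" by (simp add: power_divide)
    then have "exp (- (t / sqrt 2)\<^sup>2 / 2) * exp (- t\<^sup>2/4) = exp (- t\<^sup>2 / 2)"
      by (simp add: exp_add[symmetric])
    then show ?thesis unfolding std_normal_density_def by (simp add: mult.assoc)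
  qed
  define s where "s = (norm u)\<^sup>2"
  have ns: "s = (\<Sum>i\<in>UNIV. (u$i)\<^sup>2)"
    unfolding s_def power2_norm_eq_inner inner_vec_def by (simp add: power2_eq_square)
  have "(\<Prod>i\<in>UNIV. std_normal_density (u$i)) =
        (\<Prod>i\<in>UNIV. std_normal_density (u$i / sqrt 2) * exp (- (u$i)\<^sup>2/4))"
    by (subst split) simp
  also have "\<dots> = (\<Prod>i\<in>UNIV. std_normal_density (u$i / sqrt 2)) * (\<Prod>i\<in>UNIV. exp (- (u$i)\<^sup>2/4))"
    by (rule prod.distrib)
  also have "(\<Prod>i\<in>UNIV. exp (- (u$i)\<^sup>2/4)) = exp (\<Sum>i\<in>UNIV. - (u$i)\<^sup>2/4)"
    by (simp add: exp_sum)
  also have "(\<Sum>i\<in>UNIV. - (u$i)\<^sup>2/4) = - s / 4"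
    unfolding ns by (simp add: sum_negf sum_divide_distrib)
  finally have pe: "(\<Prod>i\<in>UNIV. std_normal_density (u$i)) = (\<Prod>i\<in>UNIV. std_normal_density (u$i / sqrt 2)) * exp (- s / 4)" .
  define P where "P = (\<Prod>i\<in>UNIV. std_normal_density (u$i / sqrt 2))"
  have P0: "0 \<le> P" unfolding P_def by (intro prod_nonneg) (simp add: nn)
  have n4: "(norm u)^4 = s\<^sup>2" unfolding s_def by simp
  have "(\<Prod>i\<in>UNIV. std_normal_density (u$i)) * (norm u)^4 = P * (s\<^sup>2 * exp (- s / 4))"
    unfolding pe n4 P_def by (simp add: algebra_simps)
  also have "\<dots> \<le> P * 64" using exp_quartic[of s] P0 by (intro mult_left_mono) (auto simp: s_def)
  finally have le: "(\<Prod>i\<in>UNIV. std_normal_density (u$i)) * (norm u)^4 \<le> 64 * P" by simp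
  have "std_gauss_density u * ennreal ((norm u)^4) = ennreal ((\<Prod>i\<in>UNIV. std_normal_density (u$i)) * (norm u)^4)"
    unfolding sgd_real by (simp add: ennreal_mult' prod_nonneg nn)
  also have "\<dots> \<le> ennreal (64 * P)" using le by (rule ennreal_leI)
  also have "ennreal (64 * P) = 64 * std_gauss_density ((1/sqrt 2) *\<^sub>R u)"
    unfolding sgd_real P_def using P0 by (simp add: ennreal_mult' prod_nonneg nn divide_inverse mult.commute)
  finally show ?thesis .
qed

lemma lborel_scale:
  fixes h :: "real^'d \<Rightarrow> ennreal"
  assumes [measurable]: "h \<in> borel_measurable borel"
  shows "(\<integral>\<^sup>+u. h ((1/sqrt 2) *\<^sub>R u) \<partial>lborel) = ennreal ((sqrt 2)^CARD('d)) * (\<integral>\<^sup>+u. h u \<partial>lborel)"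
proof -
  define c :: real where "c = sqrt 2"
  have c0: "c \<noteq> 0" by (simp add: c_def)
  have eq: "(lborel::(real^'d) measure) = density (distr lborel borel (\<lambda>x. 0 + c *\<^sub>R x)) (\<lambda>_. ennreal (\<bar>c\<bar> ^ DIM(real^'d)))"
    by (rule lborel_affine[OF c0])
  define k where "k = (\<lambda>u::real^'d. h ((1/c) *\<^sub>R u))"
  have [measurable]: "k \<in> borel_measurable borel" unfolding k_def by measurable
  have "integral\<^sup>N lborel k = integral\<^sup>N (density (distr lborel borel (\<lambda>x. 0 + c *\<^sub>R x)) (\<lambda>_. ennreal (\<bar>c\<bar> ^ DIM(real^'d)))) k"
    using eq by (rule arg_cong[where f = "\<lambda>N. integral\<^sup>N N k"])
  also have "\<dots> = (\<integral>\<^sup>+x. ennreal (\<bar>c\<bar> ^ DIM(real^'d)) * k x \<partial>(distr lborel borel (\<lambda>x. 0 + c *\<^sub>R x)))"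
    by (rule nn_integral_density) auto
  also have "\<dots> = (\<integral>\<^sup>+x. ennreal (\<bar>c\<bar> ^ DIM(real^'d)) * k (0 + c *\<^sub>R x) \<partial>lborel)"
    by (rule nn_integral_distr) auto
  also have "\<dots> = (\<integral>\<^sup>+x. ennreal (\<bar>c\<bar> ^ DIM(real^'d)) * h x \<partial>lborel)"
    unfolding k_def using c0 by simp
  also have "\<dots> = ennreal (\<bar>c\<bar> ^ DIM(real^'d)) * (\<integral>\<^sup>+x. h x \<partial>lborel)"
    by (rule nn_integral_cmult) simp
  finally show ?thesis unfolding k_def c_def by simp
qed

lemma sgd_total: "(\<integral>\<^sup>+u. std_gauss_density u \<partial>(lborel::(real^'d) measure)) = 1"
proof -
  have "1 = emeasure (Gam :: (real^'d) measure) (space Gam)" using prob_space.emeasure_space_1[OF prob_Gam] by simp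
  also have "\<dots> = (\<integral>\<^sup>+u. std_gauss_density u * indicator UNIV u \<partial>(lborel::(real^'d) measure))"
    unfolding Gam_def by (subst emeasure_density) auto
  also have "\<dots> = (\<integral>\<^sup>+u. std_gauss_density u \<partial>(lborel::(real^'d) measure))"
    by (rule nn_integral_cong) simp
  finally show ?thesis by simp
qed

lemma C4_nn: "0 \<le> C4 n" by (simp add: C4_def)

lemma m4_Gam: "(\<integral>\<^sup>+u. ennreal ((norm u)^4) \<partial>(Gam :: (real^'d) measure)) \<le> ennreal (C4 CARD('d))"
proof -
  have "(\<integral>\<^sup>+u. ennreal ((norm u)^4) \<partial>(Gam::(real^'d) measure)) = (\<integral>\<^sup>+u. std_gauss_density u * ennreal ((norm u)^4) \<partial>(lborel::(real^'d) measure))"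
    unfolding Gam_def by (subst nn_integral_density) auto
  also have "\<dots> \<le> (\<integral>\<^sup>+u. 64 * std_gauss_density ((1/sqrt 2) *\<^sub>R u) \<partial>(lborel::(real^'d) measure))"
    by (rule nn_integral_mono) (rule gauss_pt)
  also have "\<dots> = 64 * (\<integral>\<^sup>+u. std_gauss_density ((1/sqrt 2) *\<^sub>R u) \<partial>(lborel::(real^'d) measure))"
    by (rule nn_integral_cmult) simp
  also have "\<dots> = 64 * (ennreal ((sqrt 2)^CARD('d)) * 1)"
    using lborel_scale[of std_gauss_density] sgd_total by simp
  also have "\<dots> = ennreal (C4 CARD('d))" unfolding C4_def by (simp add: ennreal_mult')
  finally show ?thesis .
qed

lemma m2_Gam: "(\<integral>\<^sup>+u. ennreal ((norm u)\<^sup>2) \<partial>(Gam :: (real^'d) measure)) \<le> ennreal (C2 CARD('d))"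
proof -
  have pt: "ennreal ((norm u)\<^sup>2) \<le> 1 + ennreal ((norm u)^4)" for u :: "real^'d"
  proof -
    have "(norm u)\<^sup>2 \<le> 1 + (norm u)^4"
    proof (cases "norm u \<le> 1")
      case True
      then have "(norm u)\<^sup>2 \<le> 1" by (simp add: power_le_one)
      moreover have "0 \<le> norm u ^ 4" by simp
      ultimately show ?thesis by linarith
    next
      case False
      then have "(norm u)\<^sup>2 \<le> (norm u)^4" by (intro power_increasing) auto
      then show ?thesis by simp
    qed
    then have "ennreal ((norm u)\<^sup>2) \<le> ennreal (1 + (norm u)^4)" by (rule ennreal_leI)
    then show ?thesis by (simp add: ennreal_plus)
  qed
  have "(\<integral>\<^sup>+u. ennreal ((norm u)\<^sup>2) \<partial>(Gam::(real^'d) measure)) \<le> (\<integral>\<^sup>+u. 1 + ennreal ((norm u)^4) \<partial>(Gam::(real^'d) measure))"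
    by (rule nn_integral_mono) (rule pt)
  also have "\<dots> = (\<integral>\<^sup>+u. 1 \<partial>(Gam::(real^'d) measure)) + (\<integral>\<^sup>+u. ennreal ((norm u)^4) \<partial>(Gam::(real^'d) measure))"
    by (rule nn_integral_add) auto
  also have "(\<integral>\<^sup>+u. 1 \<partial>(Gam::(real^'d) measure)) = 1"
    using prob_space.emeasure_space_1[OF prob_Gam] by simp
  also have "1 + (\<integral>\<^sup>+u. ennreal ((norm u)^4) \<partial>(Gam::(real^'d) measure)) \<le> 1 + ennreal (C4 CARD('d))"
    using m4_Gam by (rule add_left_mono)
  also have "1 + ennreal (C4 CARD('d)) = ennreal (C2 CARD('d))" unfolding C2_def using C4_nn by (simp add: ennreal_plus)
  finally show ?thesis .
qed

lemma m4_U: "(\<integral>\<^sup>+\<omega>. ennreal ((norm (U n \<omega>))^4) \<partial>M) \<le> ennreal (C4 CARD('d))"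
  using m4_Gam U_nn[of "\<lambda>u. ennreal ((norm u)^4)" n] by simp
lemma m2_U: "(\<integral>\<^sup>+\<omega>. ennreal ((norm (U n \<omega>))\<^sup>2) \<partial>M) \<le> ennreal (C2 CARD('d))"
  using m2_Gam U_nn[of "\<lambda>u. ennreal ((norm u)\<^sup>2)" n] by simp

end


context setting begin

lemma sets_H: "sets (H j) = sigma_sets (space M) (Hg j)"
  unfolding H_def using Hg_Pow by (simp add: sets_measure_of)
lemma space_H: "space (H j) = space M"
  unfolding H_def using Hg_Pow by (simp add: space_measure_of)

lemma indep_distr:
  assumes W: "W \<in> measurable (H j) S"
  shows "(Gam::(real^'d) measure) \<Otimes>\<^sub>M distr M S W = distr M (lborel \<Otimes>\<^sub>M S) (\<lambda>\<omega>. (U j \<omega>, W \<omega>))"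
proof -
  interpret prob_space M by (rule M)
  have WM[measurable]: "W \<in> measurable M S" by (rule measurable_from_subalg[OF sub_H W])
  have UM[measurable]: "U j \<in> measurable M lborel" by (rule U_meas_lborel)
  have sub: "W -` B \<inter> space M \<in> sigma_sets (space M) (Hg j)" if "B \<in> sets S" for B
  proof -
    have "W -` B \<inter> space (H j) \<in> sets (H j)" by (rule measurable_sets[OF W that])
    then show ?thesis by (simp add: sets_H space_H)
  qed
  have ind: "indep_set (sigma_sets (space M) (gen_sets M (U j) borel)) (sigma_sets (space M) (Hg j))"
    using U_indep_past[of j] unfolding Hg_def .
  then have ind2: "\<forall>a\<in>sigma_sets (space M) (gen_sets M (U j) borel). \<forall>b\<in>sigma_sets (space M) (Hg j). prob (a \<inter> b) = prob a * prob b"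
    by (simp add: indep_sets2_eq)
  show ?thesis
  proof (rule pair_measure_eqI)
    show "sigma_finite_measure (Gam::(real^'d) measure)" by (rule prob_space_imp_sigma_finite[OF prob_Gam])
    show "sigma_finite_measure (distr M S W)" by (rule prob_space_imp_sigma_finite[OF prob_space_distr[OF WM]])
    show "sets ((Gam::(real^'d) measure) \<Otimes>\<^sub>M distr M S W) = sets (distr M (lborel \<Otimes>\<^sub>M S) (\<lambda>\<omega>. (U j \<omega>, W \<omega>)))"
      unfolding sets_distr by (rule sets_pair_measure_cong) (simp_all add: sets_Gam)
  next
    fix A B assume A: "A \<in> sets (Gam::(real^'d) measure)" and B: "B \<in> sets (distr M S W)"
    have A': "A \<in> sets borel" using A by (simp add: sets_Gam)
    have B': "B \<in> sets S" using B by simp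
    have a: "U j -` A \<inter> space M \<in> sigma_sets (space M) (gen_sets M (U j) borel)"
      using A' by (auto simp: gen_sets_def)
    have b: "W -` B \<inter> space M \<in> sigma_sets (space M) (Hg j)" by (rule sub[OF B'])
    have "emeasure (Gam::(real^'d) measure) A = emeasure M (U j -` A \<inter> space M)"
      unfolding U_distr[of j, symmetric] by (rule emeasure_distr[OF UM]) (simp add: A')
    moreover have "emeasure (distr M S W) B = emeasure M (W -` B \<inter> space M)"
      by (rule emeasure_distr[OF WM B'])
    moreover have "emeasure (distr M (lborel \<Otimes>\<^sub>M S) (\<lambda>\<omega>. (U j \<omega>, W \<omega>))) (A \<times> B)
        = emeasure M ((U j -` A \<inter> space M) \<inter> (W -` B \<inter> space M))"
    proof -
      have "A \<times> B \<in> sets (lborel \<Otimes>\<^sub>M S)" using A' B' by auto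
      then have "emeasure (distr M (lborel \<Otimes>\<^sub>M S) (\<lambda>\<omega>. (U j \<omega>, W \<omega>))) (A \<times> B) =
          emeasure M ((\<lambda>\<omega>. (U j \<omega>, W \<omega>)) -` (A \<times> B) \<inter> space M)"
        by (intro emeasure_distr) (auto simp: measurable_Pair)
      also have "(\<lambda>\<omega>. (U j \<omega>, W \<omega>)) -` (A \<times> B) \<inter> space M = (U j -` A \<inter> space M) \<inter> (W -` B \<inter> space M)"
        by auto
      finally show ?thesis .
    qed
    moreover have "prob ((U j -` A \<inter> space M) \<inter> (W -` B \<inter> space M)) = prob (U j -` A \<inter> space M) * prob (W -` B \<inter> space M)"
      using ind2 a b by blast
    ultimately show "emeasure (Gam::(real^'d) measure) A * emeasure (distr M S W) B = emeasure (distr M (lborel \<Otimes>\<^sub>M S) (\<lambda>\<omega>. (U j \<omega>, W \<omega>))) (A \<times> B)"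
      by (simp add: emeasure_eq_measure ennreal_mult')
  qed
qed

lemma indep_nn:
  fixes \<psi> :: "real^'d \<Rightarrow> 'w \<Rightarrow> ennreal"
  assumes W: "W \<in> measurable (H j) S"
    and psi[measurable]: "case_prod \<psi> \<in> borel_measurable (borel \<Otimes>\<^sub>M S)"
  shows "(\<integral>\<^sup>+\<omega>. \<psi> (U j \<omega>) (W \<omega>) \<partial>M) = (\<integral>\<^sup>+\<omega>. (\<integral>\<^sup>+u. \<psi> u (W \<omega>) \<partial>(Gam::(real^'d) measure)) \<partial>M)"
proof -
  interpret prob_space M by (rule M)
  have WM[measurable]: "W \<in> measurable M S" by (rule measurable_from_subalg[OF sub_H W])
  have UM[measurable]: "U j \<in> measurable M borel" by (rule U_meas)
  have eq: "(Gam::(real^'d) measure) \<Otimes>\<^sub>M distr M S W = distr M (lborel \<Otimes>\<^sub>M S) (\<lambda>\<omega>. (U j \<omega>, W \<omega>))"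
    by (rule indep_distr[OF W])
  interpret P: pair_sigma_finite "Gam::(real^'d) measure" "distr M S W"
    by (intro pair_sigma_finite.intro prob_space_imp_sigma_finite prob_Gam prob_space_distr WM)
  have sfG: "sigma_finite_measure ((Gam::(real^'d) measure) :: (real^'d) measure)" by (rule prob_space_imp_sigma_finite[OF prob_Gam])
  have psi'[measurable]: "(\<lambda>p. \<psi> (snd p) (fst p)) \<in> borel_measurable (S \<Otimes>\<^sub>M borel)"
    using measurable_compose[OF measurable_Pair[OF measurable_snd measurable_fst] psi] by simp
  have inner[measurable]: "(\<lambda>w. \<integral>\<^sup>+u. \<psi> u w \<partial>(Gam::(real^'d) measure)) \<in> borel_measurable S"
  proof -
    have "(\<lambda>(w, u). \<psi> u w) \<in> borel_measurable (S \<Otimes>\<^sub>M (Gam::(real^'d) measure))"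
      using psi' by (simp add: case_prod_beta' cong: measurable_cong_sets)
    then show ?thesis using sigma_finite_measure.borel_measurable_nn_integral[OF sfG, of "\<lambda>w u. \<psi> u w" S]
      by simp
  qed
  have "(\<integral>\<^sup>+\<omega>. \<psi> (U j \<omega>) (W \<omega>) \<partial>M) = integral\<^sup>N (distr M (lborel \<Otimes>\<^sub>M S) (\<lambda>\<omega>. (U j \<omega>, W \<omega>))) (case_prod \<psi>)"
    by (subst nn_integral_distr) (auto simp: measurable_Pair)
  also have "\<dots> = integral\<^sup>N ((Gam::(real^'d) measure) \<Otimes>\<^sub>M distr M S W) (case_prod \<psi>)"
    using eq by simp
  also have "\<dots> = (\<integral>\<^sup>+w. (\<integral>\<^sup>+u. \<psi> u w \<partial>(Gam::(real^'d) measure)) \<partial>(distr M S W))"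
    by (subst P.nn_integral_snd[symmetric]) (auto cong: measurable_cong_sets)
  also have "\<dots> = (\<integral>\<^sup>+\<omega>. (\<integral>\<^sup>+u. \<psi> u (W \<omega>) \<partial>(Gam::(real^'d) measure)) \<partial>M)"
    by (rule nn_integral_distr) auto
  finally show ?thesis .
qed

lemma indep_int:
  fixes \<psi> :: "real^'d \<Rightarrow> 'w \<Rightarrow> real"
  assumes W: "W \<in> measurable (H j) S"
    and psi[measurable]: "case_prod \<psi> \<in> borel_measurable (borel \<Otimes>\<^sub>M S)"
    and int: "integrable M (\<lambda>\<omega>. \<psi> (U j \<omega>) (W \<omega>))"
  shows "integrable M (\<lambda>\<omega>. \<integral>u. \<psi> u (W \<omega>) \<partial>(Gam::(real^'d) measure))"
    and "(\<integral>\<omega>. \<psi> (U j \<omega>) (W \<omega>) \<partial>M) = (\<integral>\<omega>. (\<integral>u. \<psi> u (W \<omega>) \<partial>(Gam::(real^'d) measure)) \<partial>M)"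
proof -
  interpret prob_space M by (rule M)
  have WM[measurable]: "W \<in> measurable M S" by (rule measurable_from_subalg[OF sub_H W])
  have UM[measurable]: "U j \<in> measurable M borel" by (rule U_meas)
  have eq: "(Gam::(real^'d) measure) \<Otimes>\<^sub>M distr M S W = distr M (lborel \<Otimes>\<^sub>M S) (\<lambda>\<omega>. (U j \<omega>, W \<omega>))"
    by (rule indep_distr[OF W])
  interpret P: pair_sigma_finite "Gam::(real^'d) measure" "distr M S W"
    by (intro pair_sigma_finite.intro prob_space_imp_sigma_finite prob_Gam prob_space_distr WM)
  have sfG: "sigma_finite_measure ((Gam::(real^'d) measure) :: (real^'d) measure)" by (rule prob_space_imp_sigma_finite[OF prob_Gam])
  have psi'[measurable]: "(\<lambda>p. \<psi> (snd p) (fst p)) \<in> borel_measurable (S \<Otimes>\<^sub>M borel)"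
    using measurable_compose[OF measurable_Pair[OF measurable_snd measurable_fst] psi] by simp
  have inner[measurable]: "(\<lambda>w. \<integral>u. \<psi> u w \<partial>(Gam::(real^'d) measure)) \<in> borel_measurable S"
  proof -
    have "(\<lambda>(w, u). \<psi> u w) \<in> borel_measurable (S \<Otimes>\<^sub>M (Gam::(real^'d) measure))"
      using psi' by (simp add: case_prod_beta' cong: measurable_cong_sets)
    then show ?thesis using sigma_finite_measure.borel_measurable_lebesgue_integral[OF sfG, of "\<lambda>w u. \<psi> u w" S]
      by simp
  qed
  have pm[measurable]: "(\<lambda>\<omega>. (U j \<omega>, W \<omega>)) \<in> measurable M (lborel \<Otimes>\<^sub>M S)"
    by (auto simp: measurable_Pair)
  have int1: "integrable (distr M (lborel \<Otimes>\<^sub>M S) (\<lambda>\<omega>. (U j \<omega>, W \<omega>))) (case_prod \<psi>)"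
    using int by (subst integrable_distr_eq) auto
  then have int2: "integrable ((Gam::(real^'d) measure) \<Otimes>\<^sub>M distr M S W) (case_prod \<psi>)"
    using eq by simp
  have int3: "integrable (distr M S W) (\<lambda>w. \<integral>u. \<psi> u w \<partial>(Gam::(real^'d) measure))"
    by (rule P.integrable_snd[OF int2])
  then show "integrable M (\<lambda>\<omega>. \<integral>u. \<psi> u (W \<omega>) \<partial>(Gam::(real^'d) measure))"
    by (subst (asm) integrable_distr_eq) auto
  have "(\<integral>\<omega>. \<psi> (U j \<omega>) (W \<omega>) \<partial>M) = integral\<^sup>L (distr M (lborel \<Otimes>\<^sub>M S) (\<lambda>\<omega>. (U j \<omega>, W \<omega>))) (case_prod \<psi>)"
    by (subst integral_distr) auto
  also have "\<dots> = integral\<^sup>L ((Gam::(real^'d) measure) \<Otimes>\<^sub>M distr M S W) (case_prod \<psi>)"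
    using eq by simp
  also have "\<dots> = (\<integral>w. (\<integral>u. \<psi> u w \<partial>(Gam::(real^'d) measure)) \<partial>(distr M S W))"
    by (rule P.integral_snd[OF int2, symmetric])
  also have "\<dots> = (\<integral>\<omega>. (\<integral>u. \<psi> u (W \<omega>) \<partial>(Gam::(real^'d) measure)) \<partial>M)"
    by (rule integral_distr) auto
  finally show "(\<integral>\<omega>. \<psi> (U j \<omega>) (W \<omega>) \<partial>M) = (\<integral>\<omega>. (\<integral>u. \<psi> u (W \<omega>) \<partial>(Gam::(real^'d) measure)) \<partial>M)" .
qed

lemma nn_prod:
  fixes a :: "'w \<Rightarrow> ennreal" and b :: "real^'d \<Rightarrow> ennreal"
  assumes W: "W \<in> measurable (H j) S"
    and [measurable]: "a \<in> borel_measurable S" "b \<in> borel_measurable borel"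
  shows "(\<integral>\<^sup>+\<omega>. a (W \<omega>) * b (U j \<omega>) \<partial>M) = (\<integral>\<^sup>+\<omega>. a (W \<omega>) \<partial>M) * (\<integral>\<^sup>+u. b u \<partial>(Gam::(real^'d) measure))"
proof -
  have WM[measurable]: "W \<in> measurable M S" by (rule measurable_from_subalg[OF sub_H W])
  have "(\<integral>\<^sup>+\<omega>. b (U j \<omega>) * a (W \<omega>) \<partial>M) = (\<integral>\<^sup>+\<omega>. (\<integral>\<^sup>+u. b u * a (W \<omega>) \<partial>(Gam::(real^'d) measure)) \<partial>M)"
    by (rule indep_nn[OF W, of "\<lambda>u w. b u * a w"]) measurable
  also have "\<dots> = (\<integral>\<^sup>+\<omega>. (\<integral>\<^sup>+u. b u \<partial>(Gam::(real^'d) measure)) * a (W \<omega>) \<partial>M)"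
    by (rule nn_integral_cong) (rule nn_integral_multc, simp add: cong: measurable_cong_sets)
  also have "\<dots> = (\<integral>\<^sup>+u. b u \<partial>(Gam::(real^'d) measure)) * (\<integral>\<^sup>+\<omega>. a (W \<omega>) \<partial>M)"
    by (rule nn_integral_cmult) measurable
  finally show ?thesis by (simp add: mult.commute)
qed

end


context setting begin

definition phi :: "'d \<Rightarrow> real^'d \<Rightarrow> real^'d \<Rightarrow> real" where
  "phi i v u = ((f (v + lam *\<^sub>R u) - f (v - lam *\<^sub>R u)) / (2 * lam)) * u $ i"

definition hh :: "'d \<Rightarrow> real^'d \<Rightarrow> real" where
  "hh i v = (\<integral>u. phi i v u \<partial>(Gam::(real^'d) measure))"

lemma L0: "0 \<le> L" using f_lip by (rule lipschitz_on_nonneg)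

lemma f_diff: "\<bar>f (v + lam *\<^sub>R u) - f (v - lam *\<^sub>R u)\<bar> \<le> L * (2 * lam * norm u)"
proof -
  have d: "dist (f (v + lam *\<^sub>R u)) (f (v - lam *\<^sub>R u)) \<le> L * dist (v + lam *\<^sub>R u) (v - lam *\<^sub>R u)"
    by (rule lipschitz_onD[OF f_lip]) auto
  have e1: "(v + lam *\<^sub>R u) - (v - lam *\<^sub>R u) = lam *\<^sub>R u + lam *\<^sub>R u" by simp
  have e2: "lam *\<^sub>R u + lam *\<^sub>R u = (2*lam) *\<^sub>R u" by (metis scaleR_2 scaleR_scaleR)
  have "dist (v + lam *\<^sub>R u) (v - lam *\<^sub>R u) = norm ((2*lam) *\<^sub>R u)"
    unfolding dist_norm e1 e2 ..
  also have "\<dots> = 2 * lam * norm u" using lam by simp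
  finally have "dist (v + lam *\<^sub>R u) (v - lam *\<^sub>R u) = 2 * lam * norm u" .
  then show ?thesis using d by (simp add: dist_real_def)
qed


lemma phi_bound: "\<bar>phi i v u\<bar> \<le> L * (norm u)\<^sup>2"
proof -
  define fd where "fd = f (v + lam *\<^sub>R u) - f (v - lam *\<^sub>R u)"
  have a: "\<bar>phi i v u\<bar> = (\<bar>fd\<bar> / (2 * lam)) * \<bar>u $ i\<bar>"
    unfolding phi_def fd_def abs_mult using lam by simp
  have "\<bar>fd\<bar> \<le> (L * norm u) * (2 * lam)" using f_diff[of v u] unfolding fd_def by (simp add: ac_simps)
  then have b: "\<bar>fd\<bar> / (2 * lam) \<le> L * norm u" using lam by (simp add: pos_divide_le_eq)
  have c: "\<bar>u $ i\<bar> \<le> norm u" by (rule component_le_norm_cart)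
  have "(\<bar>fd\<bar> / (2 * lam)) * \<bar>u $ i\<bar> \<le> (L * norm u) * norm u"
    by (rule mult_mono[OF b c]) (use L0 in simp_all)
  then show ?thesis unfolding a by (simp add: power2_eq_square ac_simps)
qed


lemma phi_meas[measurable]: "(\<lambda>p. phi i (fst p) (snd p)) \<in> borel_measurable (borel \<Otimes>\<^sub>M borel)"
  unfolding phi_def by measurable

lemma m2G_int: "integrable (Gam::(real^'d) measure) (\<lambda>u. (norm u)\<^sup>2)"
proof (rule integrableI_bounded)
  show "(\<lambda>u. (norm u)\<^sup>2) \<in> borel_measurable (Gam::(real^'d) measure)" by (simp add: measurable_cong_sets[OF sets_Gam refl])
  have "(\<integral>\<^sup>+u. ennreal (norm ((norm u)\<^sup>2)) \<partial>(Gam::(real^'d) measure)) = (\<integral>\<^sup>+u. ennreal ((norm u)\<^sup>2) \<partial>(Gam::(real^'d) measure))"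
    by simp
  also have "\<dots> \<le> ennreal (C2 CARD('d))" by (rule m2_Gam)
  also have "\<dots> < \<infinity>" by simp
  finally show "(\<integral>\<^sup>+u. ennreal (norm ((norm u)\<^sup>2)) \<partial>(Gam::(real^'d) measure)) < \<infinity>" .
qed

definition m2G :: real where "m2G = (\<integral>u. (norm u)\<^sup>2 \<partial>(Gam::(real^'d) measure))"

lemma phi_int: "integrable (Gam::(real^'d) measure) (phi i v)"
proof (rule Bochner_Integration.integrable_bound)
  show "integrable (Gam::(real^'d) measure) (\<lambda>u. L * (norm u)\<^sup>2)" using m2G_int by simp
  show "phi i v \<in> borel_measurable (Gam::(real^'d) measure)"
    unfolding phi_def by (simp add: measurable_cong_sets[OF sets_Gam refl])
  show "AE u in (Gam::(real^'d) measure). norm (phi i v u) \<le> norm (L * (norm u)\<^sup>2)"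
    using phi_bound L0 by simp
qed

lemma hh_bound: "\<bar>hh i v\<bar> \<le> L * m2G"
proof -
  have "\<bar>hh i v\<bar> \<le> (\<integral>u. \<bar>phi i v u\<bar> \<partial>(Gam::(real^'d) measure))"
    unfolding hh_def by (rule integral_abs_bound)
  also have "\<dots> \<le> (\<integral>u. L * (norm u)\<^sup>2 \<partial>(Gam::(real^'d) measure))"
    by (rule integral_mono) (use phi_int m2G_int phi_bound in auto)
  also have "\<dots> = L * m2G" unfolding m2G_def by simp
  finally show ?thesis .
qed

lemma hh_meas[measurable]: "hh i \<in> borel_measurable borel"
proof -
  have sfG: "sigma_finite_measure (Gam :: (real^'d) measure)" by (rule prob_space_imp_sigma_finite[OF prob_Gam])
  have "(\<lambda>(v, u). phi i v u) \<in> borel_measurable (borel \<Otimes>\<^sub>M (Gam :: (real^'d) measure))"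
    using phi_meas[of i] by (simp add: case_prod_beta' cong: measurable_cong_sets)
  then show ?thesis unfolding hh_def
    using sigma_finite_measure.borel_measurable_lebesgue_integral[OF sfG, of "\<lambda>v u. phi i v u" borel]
    by simp
qed

lemma sfs: assumes "subalgebra M FF" shows "sigma_finite_subalgebra M FF"
proof -
  interpret prob_space M by (rule M)
  have "finite_measure (restr_to_subalg M FF)"
    by (rule finite_measure_restr_to_subalg[OF assms]) (rule finite_measure_axioms)
  then show ?thesis unfolding sigma_finite_subalgebra_def using assms finite_measure.axioms(1) by blast
qed

lemma N1_eq: "N1 (Suc n) = (\<lambda>\<omega>. F (x n \<omega> + lam *\<^sub>R U n \<omega>) (\<zeta>1 n \<omega>) - f (x n \<omega> + lam *\<^sub>R U n \<omega>))"
  using N1_def by auto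
lemma N2_eq: "N2 (Suc n) = (\<lambda>\<omega>. F (x n \<omega> - lam *\<^sub>R U n \<omega>) (\<zeta>2 n \<omega>) - f (x n \<omega> - lam *\<^sub>R U n \<omega>))"
  using N2_def by auto

lemma N1_meas[measurable]: "N1 (Suc n) \<in> borel_measurable M"
  using N1_mds[of n] by (auto intro: borel_measurable_integrable)
lemma N2_meas[measurable]: "N2 (Suc n) \<in> borel_measurable M"
  using N2_mds[of n] by (auto intro: borel_measurable_integrable)

lemma alg4: "l \<noteq> 0 \<Longrightarrow> ((a+b) - (c+d))/(2*l) * u = (1/(2*l))*(u*a) - (1/(2*l))*(u*c) + ((b-d)/(2*l))*(u::real)"
  by (simp add: field_simps)

lemma g_comp: "g j \<omega> $ i = (1/(2*lam)) * (U j \<omega> $ i * N1 (Suc j) \<omega>) - (1/(2*lam)) * (U j \<omega> $ i * N2 (Suc j) \<omega>)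
    + phi i (x j \<omega>) (U j \<omega>)"
proof -
  have e1: "F (x j \<omega> + lam *\<^sub>R U j \<omega>) (\<zeta>1 j \<omega>) = N1 (Suc j) \<omega> + f (x j \<omega> + lam *\<^sub>R U j \<omega>)"
    using N1_def[of j \<omega>] by simp
  have e2: "F (x j \<omega> - lam *\<^sub>R U j \<omega>) (\<zeta>2 j \<omega>) = N2 (Suc j) \<omega> + f (x j \<omega> - lam *\<^sub>R U j \<omega>)"
    using N2_def[of j \<omega>] by simp
  have "g j \<omega> $ i = ((F (x j \<omega> + lam *\<^sub>R U j \<omega>) (\<zeta>1 j \<omega>) - F (x j \<omega> - lam *\<^sub>R U j \<omega>) (\<zeta>2 j \<omega>)) / (2 * lam)) * U j \<omega> $ i"
    using g_def[of j \<omega>] by simp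
  also have "\<dots> = ((N1 (Suc j) \<omega> + f (x j \<omega> + lam *\<^sub>R U j \<omega>)) - (N2 (Suc j) \<omega> + f (x j \<omega> - lam *\<^sub>R U j \<omega>))) / (2 * lam) * U j \<omega> $ i"
    unfolding e1 e2 ..
  also have "\<dots> = (1/(2*lam)) * (U j \<omega> $ i * N1 (Suc j) \<omega>) - (1/(2*lam)) * (U j \<omega> $ i * N2 (Suc j) \<omega>)
    + ((f (x j \<omega> + lam *\<^sub>R U j \<omega>) - f (x j \<omega> - lam *\<^sub>R U j \<omega>)) / (2 * lam)) * U j \<omega> $ i"
    by (rule alg4) (use lam in simp)
  finally show ?thesis unfolding phi_def .
qed

\<comment> \<open>L2 x Gaussian bound via independence\<close>
lemma ZU2:
  fixes Z :: "'a \<Rightarrow> real"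
  assumes Z: "Z \<in> borel_measurable (H j)"
  shows "(\<integral>\<^sup>+\<omega>. ennreal ((Z \<omega>)\<^sup>2 * (norm (U j \<omega>))\<^sup>2) \<partial>M) \<le> (\<integral>\<^sup>+\<omega>. ennreal ((Z \<omega>)\<^sup>2) \<partial>M) * ennreal (C2 CARD('d))"
proof -
  have "(\<integral>\<^sup>+\<omega>. ennreal ((Z \<omega>)\<^sup>2 * (norm (U j \<omega>))\<^sup>2) \<partial>M) = (\<integral>\<^sup>+\<omega>. ennreal ((Z \<omega>)\<^sup>2) * ennreal ((norm (U j \<omega>))\<^sup>2) \<partial>M)"
    by (simp add: ennreal_mult')
  also have "\<dots> = (\<integral>\<^sup>+\<omega>. ennreal ((Z \<omega>)\<^sup>2) \<partial>M) * (\<integral>\<^sup>+u. ennreal ((norm u)\<^sup>2) \<partial>(Gam::(real^'d) measure))"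
    by (rule nn_prod[OF Z]) auto
  also have "\<dots> \<le> (\<integral>\<^sup>+\<omega>. ennreal ((Z \<omega>)\<^sup>2) \<partial>M) * ennreal (C2 CARD('d))"
    by (intro mult_left_mono m2_Gam) simp
  finally show ?thesis .
qed

lemma ZabsU2:
  fixes Z :: "'a \<Rightarrow> real"
  assumes Z: "Z \<in> borel_measurable (H j)"
  shows "(\<integral>\<^sup>+\<omega>. ennreal (\<bar>Z \<omega>\<bar> * (norm (U j \<omega>))\<^sup>2) \<partial>M) \<le> (\<integral>\<^sup>+\<omega>. ennreal \<bar>Z \<omega>\<bar> \<partial>M) * ennreal (C2 CARD('d))"
proof -
  have "(\<integral>\<^sup>+\<omega>. ennreal (\<bar>Z \<omega>\<bar> * (norm (U j \<omega>))\<^sup>2) \<partial>M) = (\<integral>\<^sup>+\<omega>. ennreal \<bar>Z \<omega>\<bar> * ennreal ((norm (U j \<omega>))\<^sup>2) \<partial>M)"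
    by (simp add: ennreal_mult')
  also have "\<dots> = (\<integral>\<^sup>+\<omega>. ennreal \<bar>Z \<omega>\<bar> \<partial>M) * (\<integral>\<^sup>+u. ennreal ((norm u)\<^sup>2) \<partial>(Gam::(real^'d) measure))"
    by (rule nn_prod[OF Z]) auto
  also have "\<dots> \<le> (\<integral>\<^sup>+\<omega>. ennreal \<bar>Z \<omega>\<bar> \<partial>M) * ennreal (C2 CARD('d))"
    by (intro mult_left_mono m2_Gam) simp
  finally show ?thesis .
qed

end


context setting begin

lemma sq_le: "\<bar>a\<bar> \<le> b \<Longrightarrow> a\<^sup>2 \<le> (b::real)\<^sup>2"
proof -
  assume "\<bar>a\<bar> \<le> b"
  then have "\<bar>a\<bar>\<^sup>2 \<le> b\<^sup>2" by (intro power_mono) auto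
  then show ?thesis by simp
qed

lemma U_meas_m[measurable]: "U n \<in> borel_measurable M" by (rule U_meas)

lemma int_const_M: "integrable M (\<lambda>_. c::real)"
proof -
  interpret prob_space M by (rule M)
  show ?thesis by simp
qed

lemma L2_L1:
  fixes Z :: "'a \<Rightarrow> real"
  assumes Z2: "integrable M (\<lambda>\<omega>. (Z \<omega>)\<^sup>2)" and Zm: "Z \<in> borel_measurable M"
  shows "integrable M Z"
proof (rule Bochner_Integration.integrable_bound)
  show "integrable M (\<lambda>\<omega>. 1 + (Z \<omega>)\<^sup>2)" using Z2 int_const_M by simp
  show "Z \<in> borel_measurable M" by fact
  have "\<bar>z\<bar> \<le> 1 + z\<^sup>2" for z :: real
  proof (cases "\<bar>z\<bar> \<le> 1")
    case True then show ?thesis by (simp add: add_increasing2)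
  next
    case False
    then have "\<bar>z\<bar> \<le> \<bar>z\<bar> * \<bar>z\<bar>" by (intro mult_le_cancel_left1[THEN iffD2]) auto
    then show ?thesis by (simp add: power2_eq_square abs_mult[symmetric])
  qed
  then show "AE x in M. norm (Z x) \<le> norm (1 + (Z x)\<^sup>2)" by (intro AE_I2) (simp add: abs_of_nonneg)
qed

lemma nn_fin_int:
  fixes Z :: "'a \<Rightarrow> real"
  assumes "integrable M (\<lambda>\<omega>. (Z \<omega>)\<^sup>2)"
  shows "(\<integral>\<^sup>+\<omega>. ennreal ((Z \<omega>)\<^sup>2) \<partial>M) < \<infinity>"
  using nn_integral_eq_integral[OF assms] by simp

lemma ZU_L2:
  fixes Z :: "'a \<Rightarrow> real"
  assumes Z: "Z \<in> borel_measurable (H j)" and Z2: "integrable M (\<lambda>\<omega>. (Z \<omega>)\<^sup>2)"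
  shows "integrable M (\<lambda>\<omega>. (Z \<omega> * U j \<omega> $ i)\<^sup>2)"
proof (rule integrableI_bounded)
  have ZM[measurable]: "Z \<in> borel_measurable M" by (rule measurable_from_subalg[OF sub_H Z])
  show "(\<lambda>\<omega>. (Z \<omega> * U j \<omega> $ i)\<^sup>2) \<in> borel_measurable M" by measurable
  have "(\<integral>\<^sup>+\<omega>. ennreal (norm ((Z \<omega> * U j \<omega> $ i)\<^sup>2)) \<partial>M) \<le> (\<integral>\<^sup>+\<omega>. ennreal ((Z \<omega>)\<^sup>2 * (norm (U j \<omega>))\<^sup>2) \<partial>M)"
  proof (rule nn_integral_mono)
    fix \<omega>
    have "(U j \<omega> $ i)\<^sup>2 \<le> (norm (U j \<omega>))\<^sup>2"
      using component_le_norm_cart[of "U j \<omega>" i] by (rule sq_le)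
    then have "(Z \<omega> * U j \<omega> $ i)\<^sup>2 \<le> (Z \<omega>)\<^sup>2 * (norm (U j \<omega>))\<^sup>2"
      by (simp add: power_mult_distrib mult_left_mono)
    then show "ennreal (norm ((Z \<omega> * U j \<omega> $ i)\<^sup>2)) \<le> ennreal ((Z \<omega>)\<^sup>2 * (norm (U j \<omega>))\<^sup>2)"
      by (intro ennreal_leI) simp
  qed
  also have "\<dots> \<le> (\<integral>\<^sup>+\<omega>. ennreal ((Z \<omega>)\<^sup>2) \<partial>M) * ennreal (C2 CARD('d))" by (rule ZU2[OF Z])
  also have "\<dots> < \<infinity>" using nn_fin_int[OF Z2] by (simp add: ennreal_mult_less_top)
  finally show "(\<integral>\<^sup>+\<omega>. ennreal (norm ((Z \<omega> * U j \<omega> $ i)\<^sup>2)) \<partial>M) < \<infinity>" .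
qed

lemma prod_int:
  fixes a b :: "'a \<Rightarrow> real"
  assumes "integrable M (\<lambda>\<omega>. (a \<omega>)\<^sup>2)" "integrable M (\<lambda>\<omega>. (b \<omega>)\<^sup>2)"
    "a \<in> borel_measurable M" "b \<in> borel_measurable M"
  shows "integrable M (\<lambda>\<omega>. a \<omega> * b \<omega>)"
proof (rule Bochner_Integration.integrable_bound)
  show "integrable M (\<lambda>\<omega>. (a \<omega>)\<^sup>2 + (b \<omega>)\<^sup>2)" using assms by simp
  show "(\<lambda>\<omega>. a \<omega> * b \<omega>) \<in> borel_measurable M" using assms by measurable
  have "\<bar>p * q\<bar> \<le> p\<^sup>2 + q\<^sup>2" for p q :: real
  proof -
    have "0 \<le> (\<bar>p\<bar> - \<bar>q\<bar>)\<^sup>2" by simp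
    then have "2 * (\<bar>p\<bar> * \<bar>q\<bar>) \<le> p\<^sup>2 + q\<^sup>2" by (simp add: power2_diff)
    moreover have "0 \<le> \<bar>p\<bar> * \<bar>q\<bar>" by simp
    ultimately show ?thesis unfolding abs_mult by linarith
  qed
  then show "AE x in M. norm (a x * b x) \<le> norm ((a x)\<^sup>2 + (b x)\<^sup>2)" by (intro AE_I2) simp
qed

lemma N_term:
  fixes Z N :: "'a \<Rightarrow> real"
  assumes Z: "Z \<in> borel_measurable (H j)" and Z2: "integrable M (\<lambda>\<omega>. (Z \<omega>)\<^sup>2)"
    and Nm: "N \<in> borel_measurable M" and N2: "integrable M (\<lambda>\<omega>. (N \<omega>)\<^sup>2)"
    and c0: "AE \<omega> in M. real_cond_exp M (G j) N \<omega> = 0"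
  shows "integrable M (\<lambda>\<omega>. Z \<omega> * (U j \<omega> $ i * N \<omega>))"
    and "(\<integral>\<omega>. Z \<omega> * (U j \<omega> $ i * N \<omega>) \<partial>M) = 0"
proof -
  interpret sigma_finite_subalgebra M "G j" by (rule sfs[OF sub_G])
  have ZM[measurable]: "Z \<in> borel_measurable M" by (rule measurable_from_subalg[OF sub_H Z])
  have ZG: "Z \<in> borel_measurable (G j)" by (rule measurable_from_subalg[OF H_G Z])
  have UG[measurable]: "U j \<in> borel_measurable (G j)" by (rule U_G)
  have fG: "(\<lambda>\<omega>. Z \<omega> * U j \<omega> $ i) \<in> borel_measurable (G j)" using ZG by measurable
  have i1: "integrable M (\<lambda>\<omega>. (Z \<omega> * U j \<omega> $ i) * N \<omega>)"
    by (rule prod_int[OF ZU_L2[OF Z Z2] N2]) (use Nm in measurable)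
  then show "integrable M (\<lambda>\<omega>. Z \<omega> * (U j \<omega> $ i * N \<omega>))" by (simp add: mult.assoc)
  have "(\<integral>\<omega>. (Z \<omega> * U j \<omega> $ i) * N \<omega> \<partial>M) = (\<integral>\<omega>. (Z \<omega> * U j \<omega> $ i) * real_cond_exp M (G j) N \<omega> \<partial>M)"
    by (rule real_cond_exp_intg(2)[OF i1 fG Nm, symmetric])
  also have "\<dots> = (\<integral>\<omega>. 0 \<partial>M)"
  proof (rule integral_cong_AE)
    have fM[measurable]: "(\<lambda>\<omega>. Z \<omega> * U j \<omega> $ i) \<in> borel_measurable M" by (rule measurable_from_subalg[OF sub_G fG])
    show "(\<lambda>\<omega>. (Z \<omega> * U j \<omega> $ i) * real_cond_exp M (G j) N \<omega>) \<in> borel_measurable M" by measurable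
    show "(\<lambda>\<omega>. 0::real) \<in> borel_measurable M" by simp
    show "AE \<omega> in M. (Z \<omega> * U j \<omega> $ i) * real_cond_exp M (G j) N \<omega> = 0"
      using c0 by (rule AE_mp) (intro AE_I2 impI, simp)
  qed
  finally show "(\<integral>\<omega>. Z \<omega> * (U j \<omega> $ i * N \<omega>) \<partial>M) = 0" by (simp add: mult.assoc)
qed

lemma phi_term:
  fixes Z :: "'a \<Rightarrow> real"
  assumes Z: "Z \<in> borel_measurable (H j)" and Z2: "integrable M (\<lambda>\<omega>. (Z \<omega>)\<^sup>2)"
  shows "integrable M (\<lambda>\<omega>. Z \<omega> * phi i (x j \<omega>) (U j \<omega>))"
    and "(\<integral>\<omega>. Z \<omega> * phi i (x j \<omega>) (U j \<omega>) \<partial>M) = (\<integral>\<omega>. Z \<omega> * hh i (x j \<omega>) \<partial>M)"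
proof -
  have ZM[measurable]: "Z \<in> borel_measurable M" by (rule measurable_from_subalg[OF sub_H Z])
  have W: "(\<lambda>\<omega>. (Z \<omega>, x j \<omega>)) \<in> measurable (H j) (borel \<Otimes>\<^sub>M borel)"
    by (rule measurable_Pair[OF Z x_H[OF le_refl]])
  have psi: "case_prod (\<lambda>u w. fst w * phi i (snd w) u) \<in> borel_measurable (borel \<Otimes>\<^sub>M (borel \<Otimes>\<^sub>M borel))"
    unfolding phi_def by measurable
  have ZL1: "integrable M Z" by (rule L2_L1[OF Z2 ZM])
  show int: "integrable M (\<lambda>\<omega>. Z \<omega> * phi i (x j \<omega>) (U j \<omega>))"
  proof (rule integrableI_bounded)
    show "(\<lambda>\<omega>. Z \<omega> * phi i (x j \<omega>) (U j \<omega>)) \<in> borel_measurable M" unfolding phi_def by measurable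
    have "(\<integral>\<^sup>+\<omega>. ennreal (norm (Z \<omega> * phi i (x j \<omega>) (U j \<omega>))) \<partial>M) \<le> (\<integral>\<^sup>+\<omega>. ennreal L * ennreal (\<bar>Z \<omega>\<bar> * (norm (U j \<omega>))\<^sup>2) \<partial>M)"
    proof (rule nn_integral_mono)
      fix \<omega>
      have "\<bar>Z \<omega> * phi i (x j \<omega>) (U j \<omega>)\<bar> \<le> \<bar>Z \<omega>\<bar> * (L * (norm (U j \<omega>))\<^sup>2)"
        unfolding abs_mult by (intro mult_left_mono phi_bound) simp
      then show "ennreal (norm (Z \<omega> * phi i (x j \<omega>) (U j \<omega>))) \<le> ennreal L * ennreal (\<bar>Z \<omega>\<bar> * (norm (U j \<omega>))\<^sup>2)"
        using L0 by (simp add: ennreal_mult'[symmetric] ennreal_leI ac_simps)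
    qed
    also have "\<dots> = ennreal L * (\<integral>\<^sup>+\<omega>. ennreal (\<bar>Z \<omega>\<bar> * (norm (U j \<omega>))\<^sup>2) \<partial>M)"
      by (rule nn_integral_cmult) measurable
    also have "\<dots> \<le> ennreal L * ((\<integral>\<^sup>+\<omega>. ennreal \<bar>Z \<omega>\<bar> \<partial>M) * ennreal (C2 CARD('d)))"
      by (intro mult_left_mono ZabsU2[OF Z]) simp
    also have "\<dots> < \<infinity>"
    proof -
      have "(\<integral>\<^sup>+\<omega>. ennreal \<bar>Z \<omega>\<bar> \<partial>M) < \<infinity>"
        using ZL1 by (simp add: integrable_iff_bounded)
      then show ?thesis by (simp add: ennreal_mult_less_top)
    qed
    finally show "(\<integral>\<^sup>+\<omega>. ennreal (norm (Z \<omega> * phi i (x j \<omega>) (U j \<omega>))) \<partial>M) < \<infinity>" .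
  qed
  have "(\<integral>\<omega>. Z \<omega> * phi i (x j \<omega>) (U j \<omega>) \<partial>M) = (\<integral>\<omega>. (\<integral>u. Z \<omega> * phi i (x j \<omega>) u \<partial>(Gam::(real^'d) measure)) \<partial>M)"
    using indep_int(2)[OF W psi] int by simp
  also have "\<dots> = (\<integral>\<omega>. Z \<omega> * hh i (x j \<omega>) \<partial>M)"
    unfolding hh_def by simp
  finally show "(\<integral>\<omega>. Z \<omega> * phi i (x j \<omega>) (U j \<omega>) \<partial>M) = (\<integral>\<omega>. Z \<omega> * hh i (x j \<omega>) \<partial>M)" .
qed

lemma g_term:
  fixes Z :: "'a \<Rightarrow> real"
  assumes Z: "Z \<in> borel_measurable (H j)" and Z2: "integrable M (\<lambda>\<omega>. (Z \<omega>)\<^sup>2)"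
  shows "integrable M (\<lambda>\<omega>. Z \<omega> * g j \<omega> $ i)"
    and "(\<integral>\<omega>. Z \<omega> * g j \<omega> $ i \<partial>M) = (\<integral>\<omega>. Z \<omega> * hh i (x j \<omega>) \<partial>M)"
proof -
  have c1: "AE \<omega> in M. real_cond_exp M (G j) (N1 (Suc j)) \<omega> = 0" using N1_mds[of j] by blast
  have c2: "AE \<omega> in M. real_cond_exp M (G j) (N2 (Suc j)) \<omega> = 0" using N2_mds[of j] by blast
  have q1: "integrable M (\<lambda>\<omega>. (N1 (Suc j) \<omega>)\<^sup>2)" using N1_mds[of j] by blast
  have q2: "integrable M (\<lambda>\<omega>. (N2 (Suc j) \<omega>)\<^sup>2)" using N2_mds[of j] by blast
  note A = N_term[OF Z Z2 N1_meas q1 c1, of i]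
  note B = N_term[OF Z Z2 N2_meas q2 c2, of i]
  note C = phi_term[OF Z Z2, of i]
  have eq: "Z \<omega> * g j \<omega> $ i = (1/(2*lam)) * (Z \<omega> * (U j \<omega> $ i * N1 (Suc j) \<omega>))
       - (1/(2*lam)) * (Z \<omega> * (U j \<omega> $ i * N2 (Suc j) \<omega>)) + Z \<omega> * phi i (x j \<omega>) (U j \<omega>)" for \<omega>
    unfolding g_comp by (simp add: algebra_simps)
  show "integrable M (\<lambda>\<omega>. Z \<omega> * g j \<omega> $ i)"
    unfolding eq using A(1) B(1) C(1) by simp
  show "(\<integral>\<omega>. Z \<omega> * g j \<omega> $ i \<partial>M) = (\<integral>\<omega>. Z \<omega> * hh i (x j \<omega>) \<partial>M)"
    unfolding eq using A B C by simp
qed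

lemma hx_meas[measurable]: "(\<lambda>\<omega>. hh i (x j \<omega>)) \<in> borel_measurable M" by measurable

lemma hx2: "integrable M (\<lambda>\<omega>. (hh i (x j \<omega>))\<^sup>2)"
proof (rule Bochner_Integration.integrable_bound)
  show "integrable M (\<lambda>_. (L * m2G)\<^sup>2)" by (rule int_const_M)
  show "AE \<omega> in M. norm ((hh i (x j \<omega>))\<^sup>2) \<le> norm ((L * m2G)\<^sup>2)"
  proof (intro AE_I2)
    fix \<omega>
    have "\<bar>hh i (x j \<omega>)\<bar> \<le> \<bar>L * m2G\<bar>" using hh_bound[of i "x j \<omega>"] by linarith
    then show "norm ((hh i (x j \<omega>))\<^sup>2) \<le> norm ((L * m2G)\<^sup>2)"
      by (simp add: abs_le_square_iff)
  qed
qed simp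

lemma cond_id: "AE \<omega> in M. real_cond_exp M (Fs j) (\<lambda>\<omega>. g j \<omega> $ i) \<omega> = hh i (x j \<omega>)"
proof -
  interpret sigma_finite_subalgebra M "Fs j" by (rule sfs[OF sub_Fs])
  have one_H: "(\<lambda>_. 1::real) \<in> borel_measurable (H j)" by simp
  have one2: "integrable M (\<lambda>\<omega>. ((\<lambda>_. 1::real) \<omega>)\<^sup>2)" using int_const_M by simp
  show ?thesis
  proof (rule real_cond_exp_charact)
    fix A assume A: "A \<in> sets (Fs j)"
    have AH: "indicator A \<in> borel_measurable (H j)"
      by (rule measurable_from_subalg[OF Fs_H[OF le_refl]]) (use A in simp)
    have AM: "A \<in> sets M" using A sub_Fs by (auto simp: subalgebra_def)
    have A2: "integrable M (\<lambda>\<omega>. (indicator A \<omega> :: real)\<^sup>2)"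
    proof -
      have i: "integrable M (\<lambda>\<omega>. (\<lambda>_. 1::real) \<omega> * indicator A \<omega>)" by (rule integrable_real_mult_indicator[OF AM int_const_M])
      have e: "(\<lambda>\<omega>. (indicator A \<omega> :: real)\<^sup>2) = (\<lambda>\<omega>. (\<lambda>_. 1::real) \<omega> * indicator A \<omega>)" by (auto simp: indicator_def fun_eq_iff)
      show ?thesis unfolding e by (rule i)
    qed
    show "(\<integral>\<omega>\<in>A. g j \<omega> $ i \<partial>M) = (\<integral>\<omega>\<in>A. hh i (x j \<omega>) \<partial>M)"
      unfolding set_lebesgue_integral_def using g_term(2)[OF AH A2, of i] by simp
  next
    show "integrable M (\<lambda>\<omega>. g j \<omega> $ i)" using g_term(1)[OF one_H one2, of i] by simp
  next
    show "integrable M (\<lambda>\<omega>. hh i (x j \<omega>))"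
    proof (rule Bochner_Integration.integrable_bound)
      show "integrable M (\<lambda>_. L * m2G)" by (rule int_const_M)
      show "AE \<omega> in M. norm (hh i (x j \<omega>)) \<le> norm (L * m2G)"
        using hh_bound by (intro AE_I2) (metis abs_ge_self order_trans real_norm_def)
    qed simp
  next
    show "(\<lambda>\<omega>. hh i (x j \<omega>)) \<in> borel_measurable (Fs j)"
    proof (cases "j = 0")
      case True
      then have "(\<lambda>\<omega>. hh i (x j \<omega>)) = (\<lambda>_. hh i x0)" using x_init by auto
      then show ?thesis by simp
    next
      case False
      then have [measurable]: "x j \<in> borel_measurable (Fs j)" by (intro x_Fs) simp
      show ?thesis by measurable
    qed
  qed
qed

lemma Mart_AE: "AE \<omega> in M. Mart (Suc j) \<omega> = g j \<omega> - (\<chi> i. hh i (x j \<omega>))"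
proof -
  have "AE \<omega> in M. \<forall>i\<in>UNIV. real_cond_exp M (Fs j) (\<lambda>\<omega>. g j \<omega> $ i) \<omega> = hh i (x j \<omega>)"
    by (subst AE_ball_countable) (auto intro: cond_id countable_finite)
  then show ?thesis
    by (rule AE_mp) (intro AE_I2 impI, simp add: Mart_def)
qed

lemma Mart_eq: "Mart (Suc m) = (\<lambda>\<omega>. g m \<omega> - (\<chi> i. real_cond_exp M (Fs m) (\<lambda>\<omega>'. g m \<omega>' $ i) \<omega>))"
  using Mart_def by auto

lemma Mart_H: "m < j \<Longrightarrow> Mart (Suc m) \<in> borel_measurable (H j)"
proof -
  assume mj: "m < j"
  have [measurable]: "g m \<in> borel_measurable (H j)" by (rule g_H[OF mj])
  have c: "(\<lambda>\<omega>. \<chi> i. real_cond_exp M (Fs m) (\<lambda>\<omega>'. g m \<omega>' $ i) \<omega>) \<in> borel_measurable (H j)"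
    by (rule vec_lambda_meas, rule measurable_from_subalg[OF Fs_H[OF less_imp_le[OF mj]] borel_measurable_cond_exp])
  show ?thesis unfolding Mart_eq using c by measurable
qed

lemma Mart_M[measurable]: "Mart (Suc m) \<in> borel_measurable M"
  by (rule measurable_from_subalg[OF sub_H Mart_H[of m "Suc m"]]) simp

lemma orth_Mart:
  fixes Z :: "'a \<Rightarrow> real^'d"
  assumes Z: "Z \<in> borel_measurable (H j)" and Z2: "integrable M (\<lambda>\<omega>. (norm (Z \<omega>))\<^sup>2)"
  shows "(\<integral>\<omega>. inner (Z \<omega>) (Mart (Suc j) \<omega>) \<partial>M) = 0"
proof -
  have ZM[measurable]: "Z \<in> borel_measurable M" by (rule measurable_from_subalg[OF sub_H Z])
  have Zi: "(\<lambda>\<omega>. Z \<omega> $ i) \<in> borel_measurable (H j)" for i using Z by measurable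
  have Zi2: "integrable M (\<lambda>\<omega>. (Z \<omega> $ i)\<^sup>2)" for i
  proof (rule Bochner_Integration.integrable_bound[OF Z2])
    show "(\<lambda>\<omega>. (Z \<omega> $ i)\<^sup>2) \<in> borel_measurable M" by measurable
    show "AE \<omega> in M. norm ((Z \<omega> $ i)\<^sup>2) \<le> norm ((norm (Z \<omega>))\<^sup>2)"
    proof (intro AE_I2)
      fix \<omega>
      have "\<bar>Z \<omega> $ i\<bar> \<le> \<bar>norm (Z \<omega>)\<bar>" using component_le_norm_cart[of "Z \<omega>" i] by simp
      then have "(Z \<omega> $ i)\<^sup>2 \<le> (norm (Z \<omega>))\<^sup>2" by (intro sq_le) simp
      then show "norm ((Z \<omega> $ i)\<^sup>2) \<le> norm ((norm (Z \<omega>))\<^sup>2)" by simp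
    qed
  qed
  have "(\<integral>\<omega>. inner (Z \<omega>) (Mart (Suc j) \<omega>) \<partial>M) =
        (\<integral>\<omega>. (\<Sum>i\<in>UNIV. Z \<omega> $ i * g j \<omega> $ i - Z \<omega> $ i * hh i (x j \<omega>)) \<partial>M)"
  proof (rule integral_cong_AE)
    show "(\<lambda>\<omega>. inner (Z \<omega>) (Mart (Suc j) \<omega>)) \<in> borel_measurable M" by measurable
    show "(\<lambda>\<omega>. \<Sum>i\<in>UNIV. Z \<omega> $ i * g j \<omega> $ i - Z \<omega> $ i * hh i (x j \<omega>)) \<in> borel_measurable M"
      by measurable
    show "AE \<omega> in M. inner (Z \<omega>) (Mart (Suc j) \<omega>) = (\<Sum>i\<in>UNIV. Z \<omega> $ i * g j \<omega> $ i - Z \<omega> $ i * hh i (x j \<omega>))"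
      using Mart_AE[of j]
    proof (rule AE_mp, intro AE_I2 impI)
      fix \<omega> assume e: "Mart (Suc j) \<omega> = g j \<omega> - (\<chi> i. hh i (x j \<omega>))"
      show "inner (Z \<omega>) (Mart (Suc j) \<omega>) = (\<Sum>i\<in>UNIV. Z \<omega> $ i * g j \<omega> $ i - Z \<omega> $ i * hh i (x j \<omega>))"
        unfolding e inner_vec_def by (simp add: right_diff_distrib)
    qed
  qed
  also have "\<dots> = (\<Sum>i\<in>UNIV. (\<integral>\<omega>. Z \<omega> $ i * g j \<omega> $ i \<partial>M) - (\<integral>\<omega>. Z \<omega> $ i * hh i (x j \<omega>) \<partial>M))"
  proof -
    have ig: "integrable M (\<lambda>\<omega>. Z \<omega> $ i * g j \<omega> $ i)" for i by (rule g_term(1)[OF Zi Zi2])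
    have ih: "integrable M (\<lambda>\<omega>. Z \<omega> $ i * hh i (x j \<omega>))" for i
      by (rule prod_int[OF Zi2 hx2]) measurable
    have "(\<integral>\<omega>. (\<Sum>i\<in>UNIV. Z \<omega> $ i * g j \<omega> $ i - Z \<omega> $ i * hh i (x j \<omega>)) \<partial>M) =
          (\<Sum>i\<in>UNIV. (\<integral>\<omega>. Z \<omega> $ i * g j \<omega> $ i - Z \<omega> $ i * hh i (x j \<omega>) \<partial>M))"
      using Bochner_Integration.integral_sum[where I=UNIV and M=M and f="\<lambda>i \<omega>. Z \<omega> $ i * g j \<omega> $ i - Z \<omega> $ i * hh i (x j \<omega>)"] ig ih by simp
    also have "\<dots> = (\<Sum>i\<in>UNIV. (\<integral>\<omega>. Z \<omega> $ i * g j \<omega> $ i \<partial>M) - (\<integral>\<omega>. Z \<omega> $ i * hh i (x j \<omega>) \<partial>M))"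
      by (rule sum.cong) (use ig ih in simp_all)
    finally show ?thesis .
  qed
  also have "\<dots> = 0" using g_term(2)[OF Zi Zi2] by simp
  finally show ?thesis .
qed

end


lemma sq4: "(p+q+r+s)\<^sup>2 \<le> 4*(p\<^sup>2+q\<^sup>2+r\<^sup>2+(s::real)\<^sup>2)"
proof -
  have e: "4*(p\<^sup>2+q\<^sup>2+r\<^sup>2+s\<^sup>2) - (p+q+r+s)\<^sup>2 = (p-q)\<^sup>2 + (p-r)\<^sup>2 + (p-s)\<^sup>2 + (q-r)\<^sup>2 + (q-s)\<^sup>2 + (r-s)\<^sup>2"
    by (simp add: power2_eq_square algebra_simps)
  have "0 \<le> (p-q)\<^sup>2 + (p-r)\<^sup>2 + (p-s)\<^sup>2 + (q-r)\<^sup>2 + (q-s)\<^sup>2 + (r-s)\<^sup>2" by simp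
  then show ?thesis using e by linarith
qed

lemma sum_ivl_split:
  fixes D :: "nat \<Rightarrow> 'b::ab_group_add"
  assumes "n \<le> Suc k"
  shows "(\<Sum>m=n..<Suc k. D m) = (\<Sum>m<Suc k. D m) - (\<Sum>m<n. D m)"
proof -
  have "(\<Sum>m<Suc k. D m) = (\<Sum>m<n. D m) + (\<Sum>m=n..<Suc k. D m)"
    using assms by (metis atLeast0LessThan sum.atLeastLessThan_concat zero_le)
  then show ?thesis by simp
qed

lemma window:
  fixes D :: "nat \<Rightarrow> 'b::real_normed_vector" and \<tau> :: "nat \<Rightarrow> nat"
  assumes C: "Cauchy (\<lambda>n. \<Sum>m<n. D m)" and tau: "\<And>n. n \<le> \<tau> n"
  shows "(\<lambda>n. SUP k\<in>{n..\<tau> n}. norm (\<Sum>m=n..k. D m)) \<longlonglongrightarrow> 0"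
proof (rule LIMSEQ_I)
  fix r :: real assume r: "0 < r"
  obtain N where N: "\<forall>m\<ge>N. \<forall>l\<ge>N. norm ((\<Sum>i<m. D i) - (\<Sum>i<l. D i)) < r/2"
    using CauchyD[OF C, of "r/2"] r by auto
  show "\<exists>no. \<forall>n\<ge>no. norm ((SUP k\<in>{n..\<tau> n}. norm (\<Sum>m=n..k. D m)) - 0) < r"
  proof (intro exI allI impI)
    fix n assume nN: "N \<le> n"
    have each: "norm (\<Sum>m=n..k. D m) \<le> r/2" if k: "k \<in> {n..\<tau> n}" for k
    proof -
      have "(\<Sum>m=n..k. D m) = (\<Sum>m=n..<Suc k. D m)" by (simp add: atLeastLessThanSuc_atLeastAtMost)
      also have "\<dots> = (\<Sum>m<Suc k. D m) - (\<Sum>m<n. D m)" by (rule sum_ivl_split) (use k in auto)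
      finally have "(\<Sum>m=n..k. D m) = (\<Sum>m<Suc k. D m) - (\<Sum>m<n. D m)" .
      moreover have "Suc k \<ge> N" using k nN by auto
      ultimately show ?thesis using N nN by (metis less_imp_le)
    qed
    have ne: "{n..\<tau> n} \<noteq> {}" using tau[of n] by auto
    have le: "(SUP k\<in>{n..\<tau> n}. norm (\<Sum>m=n..k. D m)) \<le> r/2"
      by (rule cSUP_least[OF ne]) (rule each)
    have bdd: "bdd_above ((\<lambda>k. norm (\<Sum>m=n..k. D m)) ` {n..\<tau> n})" by (rule bdd_above_finite) simp
    have "norm (\<Sum>m=n..n. D m) \<le> (SUP k\<in>{n..\<tau> n}. norm (\<Sum>m=n..k. D m))"
      by (rule cSUP_upper[OF _ bdd]) (use tau[of n] in auto)
    then have ge: "0 \<le> (SUP k\<in>{n..\<tau> n}. norm (\<Sum>m=n..k. D m))" using norm_ge_zero order_trans by blast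
    show "norm ((SUP k\<in>{n..\<tau> n}. norm (\<Sum>m=n..k. D m)) - 0) < r"
      using le ge r by simp
  qed
qed

lemma tau_ge:
  fixes \<alpha> :: "nat \<Rightarrow> real"
  assumes div: "filterlim (\<lambda>n. \<Sum>i<n. \<alpha> i) at_top sequentially"
  shows "n \<le> tau1 \<alpha> n T"
proof -
  have "eventually (\<lambda>N. T + (\<Sum>i<n. \<alpha> i) \<le> (\<Sum>i<N. \<alpha> i)) sequentially"
    using div unfolding filterlim_at_top by blast
  then obtain N0 where N0: "\<And>N. N \<ge> N0 \<Longrightarrow> T + (\<Sum>i<n. \<alpha> i) \<le> (\<Sum>i<N. \<alpha> i)"
    unfolding eventually_sequentially by blast
  define m where "m = max n N0"
  have "(\<Sum>k=n..m+1. \<alpha> k) = (\<Sum>k=n..<Suc (m+1). \<alpha> k)" by (simp add: atLeastLessThanSuc_atLeastAtMost)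
  also have "\<dots> = (\<Sum>k<Suc (m+1). \<alpha> k) - (\<Sum>k<n. \<alpha> k)" by (rule sum_ivl_split) (simp add: m_def)
  finally have "(\<Sum>k=n..m+1. \<alpha> k) = (\<Sum>k<Suc (m+1). \<alpha> k) - (\<Sum>k<n. \<alpha> k)" .
  moreover have "T + (\<Sum>i<n. \<alpha> i) \<le> (\<Sum>i<Suc (m+1). \<alpha> i)" by (rule N0) (simp add: m_def)
  ultimately have ex: "n \<le> m \<and> T \<le> (\<Sum>k=n..m+1. \<alpha> k)" by (simp add: m_def)
  show ?thesis unfolding tau1_def using LeastI[of "\<lambda>m. n \<le> m \<and> T \<le> (\<Sum>k=n..m+1. \<alpha> k)", OF ex] by blast
qed

context setting begin

lemma nn_int:
  fixes h :: "'a \<Rightarrow> real"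
  assumes "h \<in> borel_measurable M" "\<And>\<omega>. 0 \<le> h \<omega>" "(\<integral>\<^sup>+\<omega>. ennreal (h \<omega>) \<partial>M) \<le> ennreal c"
  shows "integrable M h"
proof (rule integrableI_bounded)
  show "h \<in> borel_measurable M" by fact
  have "(\<integral>\<^sup>+\<omega>. ennreal (norm (h \<omega>)) \<partial>M) = (\<integral>\<^sup>+\<omega>. ennreal (h \<omega>) \<partial>M)"
    using assms(2) by simp
  also have "\<dots> \<le> ennreal c" by fact
  also have "\<dots> < \<infinity>" by simp
  finally show "(\<integral>\<^sup>+\<omega>. ennreal (norm (h \<omega>)) \<partial>M) < \<infinity>" .
qed

lemma nn_real:
  fixes h :: "'a \<Rightarrow> real"
  assumes "integrable M h" "\<And>\<omega>. 0 \<le> h \<omega>" "(\<integral>\<^sup>+\<omega>. ennreal (h \<omega>) \<partial>M) \<le> ennreal c" "0 \<le> c"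
  shows "(\<integral>\<omega>. h \<omega> \<partial>M) \<le> c"
proof -
  have "ennreal (\<integral>\<omega>. h \<omega> \<partial>M) = (\<integral>\<^sup>+\<omega>. ennreal (h \<omega>) \<partial>M)"
    using nn_integral_eq_integral[OF assms(1)] assms(2) by simp
  also have "\<dots> \<le> ennreal c" by fact
  finally show ?thesis using assms(4) by (simp add: ennreal_le_iff)
qed

lemma C2_nn: "0 \<le> C2 n" unfolding C2_def using C4_nn by simp

lemma U2_int: "integrable M (\<lambda>\<omega>. (norm (U j \<omega>))\<^sup>2)"
  by (rule nn_int[OF _ _ m2_U]) auto
lemma U4_int: "integrable M (\<lambda>\<omega>. (norm (U j \<omega>))^4)"
  by (rule nn_int[OF _ _ m4_U]) auto
lemma U2_le: "(\<integral>\<omega>. (norm (U j \<omega>))\<^sup>2 \<partial>M) \<le> C2 CARD('d)"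
  by (rule nn_real[OF U2_int _ m2_U C2_nn]) simp
lemma U4_le: "(\<integral>\<omega>. (norm (U j \<omega>))^4 \<partial>M) \<le> C4 CARD('d)"
  by (rule nn_real[OF U4_int _ m4_U C4_nn]) simp

lemma NU2:
  fixes N :: "'a \<Rightarrow> real"
  assumes Nm[measurable]: "N \<in> borel_measurable M" and N2: "integrable M (\<lambda>\<omega>. (N \<omega>)\<^sup>2)"
    and cK: "AE \<omega> in M. real_cond_exp M (G j) (\<lambda>\<omega>. (N \<omega>)\<^sup>2) \<omega> \<le> K"
  shows "(\<integral>\<^sup>+\<omega>. ennreal ((N \<omega>)\<^sup>2 * (norm (U j \<omega>))\<^sup>2) \<partial>M) \<le> ennreal (max K 0 * C2 CARD('d))"
proof -
  interpret sigma_finite_subalgebra M "G j" by (rule sfs[OF sub_G])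
  define K' where "K' = max K 0"
  have K'0: "0 \<le> K'" unfolding K'_def by simp
  define w where "w = (\<lambda>(k::nat) \<omega>. min ((norm (U j \<omega>))\<^sup>2) (real k))"
  have UG[measurable]: "U j \<in> borel_measurable (G j)" by (rule U_G)
  have wG[measurable]: "w k \<in> borel_measurable (G j)" for k unfolding w_def by measurable
  have wM[measurable]: "w k \<in> borel_measurable M" for k unfolding w_def by measurable
  have w0: "0 \<le> w k \<omega>" for k \<omega> unfolding w_def by simp
  have wk: "w k \<omega> \<le> real k" for k \<omega> unfolding w_def by simp
  have wU: "w k \<omega> \<le> (norm (U j \<omega>))\<^sup>2" for k \<omega> unfolding w_def by simp
  have N2m: "(\<lambda>\<omega>. (N \<omega>)\<^sup>2) \<in> borel_measurable M" by measurable
  have step: "(\<integral>\<^sup>+\<omega>. ennreal (w k \<omega> * (N \<omega>)\<^sup>2) \<partial>M) \<le> ennreal (K' * C2 CARD('d))" for k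
  proof -
    have i1: "integrable M (\<lambda>\<omega>. w k \<omega> * (N \<omega>)\<^sup>2)"
    proof (rule Bochner_Integration.integrable_bound)
      show "integrable M (\<lambda>\<omega>. real k * (N \<omega>)\<^sup>2)" using N2 by simp
      show "(\<lambda>\<omega>. w k \<omega> * (N \<omega>)\<^sup>2) \<in> borel_measurable M" by measurable
      show "AE \<omega> in M. norm (w k \<omega> * (N \<omega>)\<^sup>2) \<le> norm (real k * (N \<omega>)\<^sup>2)"
        using w0 wk by (intro AE_I2) (simp add: abs_mult mult_right_mono)
    qed
    have wint: "integrable M (w k)"
    proof (rule Bochner_Integration.integrable_bound[OF U2_int])
      show "w k \<in> borel_measurable M" by measurable
      show "AE \<omega> in M. norm (w k \<omega>) \<le> norm ((norm (U j \<omega>))\<^sup>2)"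
        using w0 wU by (intro AE_I2) simp
    qed
    have eq: "(\<integral>\<omega>. w k \<omega> * (N \<omega>)\<^sup>2 \<partial>M) = (\<integral>\<omega>. w k \<omega> * real_cond_exp M (G j) (\<lambda>\<omega>. (N \<omega>)\<^sup>2) \<omega> \<partial>M)"
      by (rule real_cond_exp_intg(2)[OF i1 wG N2m, symmetric])
    have i2: "integrable M (\<lambda>\<omega>. w k \<omega> * real_cond_exp M (G j) (\<lambda>\<omega>. (N \<omega>)\<^sup>2) \<omega>)"
      by (rule real_cond_exp_intg(1)[OF i1 wG N2m])
    have "(\<integral>\<omega>. w k \<omega> * real_cond_exp M (G j) (\<lambda>\<omega>. (N \<omega>)\<^sup>2) \<omega> \<partial>M) \<le> (\<integral>\<omega>. w k \<omega> * K' \<partial>M)"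
    proof (rule integral_mono_AE[OF i2])
      show "integrable M (\<lambda>\<omega>. w k \<omega> * K')" using wint by simp
      show "AE \<omega> in M. w k \<omega> * real_cond_exp M (G j) (\<lambda>\<omega>. (N \<omega>)\<^sup>2) \<omega> \<le> w k \<omega> * K'"
        using cK
      proof (rule AE_mp, intro AE_I2 impI)
        fix \<omega> assume "real_cond_exp M (G j) (\<lambda>\<omega>. (N \<omega>)\<^sup>2) \<omega> \<le> K"
        then have "real_cond_exp M (G j) (\<lambda>\<omega>. (N \<omega>)\<^sup>2) \<omega> \<le> K'" unfolding K'_def by simp
        then show "w k \<omega> * real_cond_exp M (G j) (\<lambda>\<omega>. (N \<omega>)\<^sup>2) \<omega> \<le> w k \<omega> * K'"
          using w0 by (rule mult_left_mono)
      qed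
    qed
    also have "\<dots> = K' * (\<integral>\<omega>. w k \<omega> \<partial>M)" by (simp add: mult.commute)
    also have "\<dots> \<le> K' * (\<integral>\<omega>. (norm (U j \<omega>))\<^sup>2 \<partial>M)"
      by (intro mult_left_mono K'0 integral_mono[OF wint U2_int]) (simp add: wU)
    also have "\<dots> \<le> K' * C2 CARD('d)" by (intro mult_left_mono K'0 U2_le)
    finally have le: "(\<integral>\<omega>. w k \<omega> * (N \<omega>)\<^sup>2 \<partial>M) \<le> K' * C2 CARD('d)" unfolding eq .
    have "(\<integral>\<^sup>+\<omega>. ennreal (w k \<omega> * (N \<omega>)\<^sup>2) \<partial>M) = ennreal (\<integral>\<omega>. w k \<omega> * (N \<omega>)\<^sup>2 \<partial>M)"
      by (rule nn_integral_eq_integral[OF i1]) (simp add: w0)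
    also have "\<dots> \<le> ennreal (K' * C2 CARD('d))" using le by (rule ennreal_leI)
    finally show ?thesis .
  qed
  have sup: "ennreal ((N \<omega>)\<^sup>2 * (norm (U j \<omega>))\<^sup>2) = (SUP k. ennreal (w k \<omega> * (N \<omega>)\<^sup>2))" for \<omega>
  proof (rule antisym)
    obtain k :: nat where k: "(norm (U j \<omega>))\<^sup>2 \<le> real k" using real_arch_simple by blast
    then have "w k \<omega> = (norm (U j \<omega>))\<^sup>2" unfolding w_def by simp
    then show "ennreal ((N \<omega>)\<^sup>2 * (norm (U j \<omega>))\<^sup>2) \<le> (SUP k. ennreal (w k \<omega> * (N \<omega>)\<^sup>2))"
      by (intro SUP_upper2[of k]) (simp_all add: mult.commute)
    show "(SUP k. ennreal (w k \<omega> * (N \<omega>)\<^sup>2)) \<le> ennreal ((N \<omega>)\<^sup>2 * (norm (U j \<omega>))\<^sup>2)"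
    proof (rule SUP_least)
      fix k
      have "w k \<omega> * (N \<omega>)\<^sup>2 \<le> (norm (U j \<omega>))\<^sup>2 * (N \<omega>)\<^sup>2" by (intro mult_right_mono wU) simp
      then show "ennreal (w k \<omega> * (N \<omega>)\<^sup>2) \<le> ennreal ((N \<omega>)\<^sup>2 * (norm (U j \<omega>))\<^sup>2)"
        by (intro ennreal_leI) (simp add: mult.commute)
    qed
  qed
  have inc: "incseq (\<lambda>k \<omega>. ennreal (w k \<omega> * (N \<omega>)\<^sup>2))"
  proof (rule incseq_SucI, rule le_funI)
    fix k \<omega>
    have "w k \<omega> \<le> w (Suc k) \<omega>" unfolding w_def by (simp add: min.coboundedI1 min_def)
    then show "ennreal (w k \<omega> * (N \<omega>)\<^sup>2) \<le> ennreal (w (Suc k) \<omega> * (N \<omega>)\<^sup>2)"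
      by (intro ennreal_leI mult_right_mono) simp_all
  qed
  have "(\<integral>\<^sup>+\<omega>. ennreal ((N \<omega>)\<^sup>2 * (norm (U j \<omega>))\<^sup>2) \<partial>M) = (\<integral>\<^sup>+\<omega>. (SUP k. ennreal (w k \<omega> * (N \<omega>)\<^sup>2)) \<partial>M)"
    using sup by simp
  also have "\<dots> = (SUP k. \<integral>\<^sup>+\<omega>. ennreal (w k \<omega> * (N \<omega>)\<^sup>2) \<partial>M)"
    by (rule nn_integral_monotone_convergence_SUP[OF inc]) measurable
  also have "\<dots> \<le> ennreal (K' * C2 CARD('d))" by (rule SUP_least) (rule step)
  finally show ?thesis unfolding K'_def .
qed

end


context setting begin

lemma abs4: "\<bar>(n1 + fp) - (n2 + fm)\<bar> \<le> \<bar>n1\<bar> + \<bar>n2\<bar> + \<bar>fp - (fm::real)\<bar>"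
  by (auto simp: abs_if)

lemma Mart_L2: "(\<integral>\<^sup>+\<omega>. ennreal ((norm (Mart (Suc j) \<omega>))\<^sup>2) \<partial>M) \<le>
   ennreal (4 * ((1/(2*lam))\<^sup>2 * (max K 0 * C2 CARD('d)) + (1/(2*lam))\<^sup>2 * (max K 0 * C2 CARD('d))
     + L\<^sup>2 * C4 CARD('d) + (real CARD('d) * (L * m2G))\<^sup>2))"
proof -
  define a where "a = 1/(2*lam)"
  define B where "B = real CARD('d) * (L * m2G)"
  define X1 where "X1 = (\<lambda>\<omega>. (N1 (Suc j) \<omega>)\<^sup>2 * (norm (U j \<omega>))\<^sup>2)"
  define X2 where "X2 = (\<lambda>\<omega>. (N2 (Suc j) \<omega>)\<^sup>2 * (norm (U j \<omega>))\<^sup>2)"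
  define bd where "bd = (\<lambda>\<omega>. 4 * (a\<^sup>2 * X1 \<omega> + a\<^sup>2 * X2 \<omega> + L\<^sup>2 * (norm (U j \<omega>))^4 + B\<^sup>2))"
  have a0: "0 < a" unfolding a_def using lam by simp
  have nU1: "(\<integral>\<^sup>+\<omega>. ennreal (X1 \<omega>) \<partial>M) \<le> ennreal (max K 0 * C2 CARD('d))"
    unfolding X1_def by (rule NU2) (use N1_mds[of j] in auto)
  have nU2: "(\<integral>\<^sup>+\<omega>. ennreal (X2 \<omega>) \<partial>M) \<le> ennreal (max K 0 * C2 CARD('d))"
    unfolding X2_def by (rule NU2) (use N2_mds[of j] in auto)
  have X1m[measurable]: "X1 \<in> borel_measurable M" unfolding X1_def by measurable
  have X2m[measurable]: "X2 \<in> borel_measurable M" unfolding X2_def by measurable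
  have iX1: "integrable M X1" by (rule nn_int[OF X1m _ nU1]) (simp add: X1_def)
  have iX2: "integrable M X2" by (rule nn_int[OF X2m _ nU2]) (simp add: X2_def)
  have KC: "0 \<le> max K 0 * C2 CARD('d)" using C2_nn by simp
  have lX1: "(\<integral>\<omega>. X1 \<omega> \<partial>M) \<le> max K 0 * C2 CARD('d)" by (rule nn_real[OF iX1 _ nU1 KC]) (simp add: X1_def)
  have lX2: "(\<integral>\<omega>. X2 \<omega> \<partial>M) \<le> max K 0 * C2 CARD('d)" by (rule nn_real[OF iX2 _ nU2 KC]) (simp add: X2_def)
  have ibd: "integrable M bd" unfolding bd_def using iX1 iX2 U4_int int_const_M by simp
  have bd0: "0 \<le> bd \<omega>" for \<omega> unfolding bd_def X1_def X2_def by simp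
  have pt: "(norm (Mart (Suc j) \<omega>))\<^sup>2 \<le> bd \<omega>" if e: "Mart (Suc j) \<omega> = g j \<omega> - (\<chi> i. hh i (x j \<omega>))" for \<omega>
  proof -
    define u where "u = norm (U j \<omega>)"
    define n1 where "n1 = N1 (Suc j) \<omega>"
    define n2 where "n2 = N2 (Suc j) \<omega>"
    define fp where "fp = f (x j \<omega> + lam *\<^sub>R U j \<omega>)"
    define fm where "fm = f (x j \<omega> - lam *\<^sub>R U j \<omega>)"
    have u0: "0 \<le> u" unfolding u_def by simp
    have e1: "F (x j \<omega> + lam *\<^sub>R U j \<omega>) (\<zeta>1 j \<omega>) = n1 + fp"
      using N1_def[of j \<omega>] unfolding n1_def fp_def by simp
    have e2: "F (x j \<omega> - lam *\<^sub>R U j \<omega>) (\<zeta>2 j \<omega>) = n2 + fm"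
      using N2_def[of j \<omega>] unfolding n2_def fm_def by simp
    have gform: "g j \<omega> = (((n1 + fp) - (n2 + fm)) / (2 * lam)) *\<^sub>R U j \<omega>"
      using g_def[of j \<omega>] unfolding e1 e2 .
    have ng: "norm (g j \<omega>) = \<bar>(n1 + fp) - (n2 + fm)\<bar> / (2 * lam) * u"
      unfolding gform u_def using lam by simp
    have fd: "\<bar>fp - fm\<bar> \<le> L * (2 * lam * u)" unfolding fp_def fm_def u_def by (rule f_diff)
    have "\<bar>(n1 + fp) - (n2 + fm)\<bar> \<le> \<bar>n1\<bar> + \<bar>n2\<bar> + L * (2 * lam * u)"
      using abs4[of n1 fp n2 fm] fd by linarith
    then have "\<bar>(n1 + fp) - (n2 + fm)\<bar> / (2 * lam) * u \<le> (\<bar>n1\<bar> + \<bar>n2\<bar> + L * (2 * lam * u)) / (2 * lam) * u"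
      by (intro mult_right_mono divide_right_mono u0) (use lam in simp_all)
    also have "\<dots> = a * \<bar>n1\<bar> * u + a * \<bar>n2\<bar> * u + L * u\<^sup>2"
      unfolding a_def using lam by (simp add: field_simps power2_eq_square)
    finally have ngb: "norm (g j \<omega>) \<le> a * \<bar>n1\<bar> * u + a * \<bar>n2\<bar> * u + L * u\<^sup>2" unfolding ng .
    have "norm (\<chi> i. hh i (x j \<omega>)) \<le> (\<Sum>i\<in>UNIV. \<bar>(\<chi> i. hh i (x j \<omega>)) $ i\<bar>)" by (rule norm_le_l1_cart)
    also have "\<dots> = (\<Sum>i\<in>UNIV. \<bar>hh i (x j \<omega>)\<bar>)" by simp
    also have "\<dots> \<le> of_nat (card (UNIV::'d set)) * (L * m2G)" by (rule sum_bounded_above) (rule hh_bound)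
    finally have nhb: "norm (\<chi> i. hh i (x j \<omega>)) \<le> B" unfolding B_def by simp
    have "norm (Mart (Suc j) \<omega>) \<le> norm (g j \<omega>) + norm (\<chi> i. hh i (x j \<omega>))"
      unfolding e by (rule norm_triangle_ineq4)
    also have "\<dots> \<le> a * \<bar>n1\<bar> * u + a * \<bar>n2\<bar> * u + L * u\<^sup>2 + B" using ngb nhb by linarith
    finally have nm: "norm (Mart (Suc j) \<omega>) \<le> a * \<bar>n1\<bar> * u + a * \<bar>n2\<bar> * u + L * u\<^sup>2 + B" .
    have "(norm (Mart (Suc j) \<omega>))\<^sup>2 \<le> (a * \<bar>n1\<bar> * u + a * \<bar>n2\<bar> * u + L * u\<^sup>2 + B)\<^sup>2"
      by (rule power_mono[OF nm]) simp
    also have "\<dots> \<le> 4 * ((a * \<bar>n1\<bar> * u)\<^sup>2 + (a * \<bar>n2\<bar> * u)\<^sup>2 + (L * u\<^sup>2)\<^sup>2 + B\<^sup>2)" by (rule sq4)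
    also have "\<dots> = bd \<omega>"
      unfolding bd_def X1_def X2_def n1_def n2_def u_def by (simp add: power_mult_distrib power2_abs)
    finally show ?thesis .
  qed
  have ae: "AE \<omega> in M. ennreal ((norm (Mart (Suc j) \<omega>))\<^sup>2) \<le> ennreal (bd \<omega>)"
  proof (rule AE_mp[OF Mart_AE[of j]], intro AE_I2 impI)
    fix \<omega> assume "Mart (Suc j) \<omega> = g j \<omega> - (\<chi> i. hh i (x j \<omega>))"
    then show "ennreal ((norm (Mart (Suc j) \<omega>))\<^sup>2) \<le> ennreal (bd \<omega>)" by (intro ennreal_leI pt)
  qed
  have "(\<integral>\<^sup>+\<omega>. ennreal ((norm (Mart (Suc j) \<omega>))\<^sup>2) \<partial>M) \<le> (\<integral>\<^sup>+\<omega>. ennreal (bd \<omega>) \<partial>M)"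
    using ae by (rule nn_integral_mono_AE)
  also have "\<dots> = ennreal (\<integral>\<omega>. bd \<omega> \<partial>M)" by (rule nn_integral_eq_integral[OF ibd]) (simp add: bd0)
  also have "\<dots> \<le> ennreal (4 * (a\<^sup>2 * (max K 0 * C2 CARD('d)) + a\<^sup>2 * (max K 0 * C2 CARD('d)) + L\<^sup>2 * C4 CARD('d) + B\<^sup>2))"
  proof (rule ennreal_leI)
    have "(\<integral>\<omega>. bd \<omega> \<partial>M) = 4 * (a\<^sup>2 * (\<integral>\<omega>. X1 \<omega> \<partial>M) + a\<^sup>2 * (\<integral>\<omega>. X2 \<omega> \<partial>M) + L\<^sup>2 * (\<integral>\<omega>. (norm (U j \<omega>))^4 \<partial>M) + B\<^sup>2)"
    proof -
      interpret prob_space M by (rule M)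
      show ?thesis unfolding bd_def using iX1 iX2 U4_int prob_space by simp
    qed
    also have "\<dots> \<le> 4 * (a\<^sup>2 * (max K 0 * C2 CARD('d)) + a\<^sup>2 * (max K 0 * C2 CARD('d)) + L\<^sup>2 * C4 CARD('d) + B\<^sup>2)"
      using lX1 lX2 U4_le[of j] by (intro mult_left_mono add_mono mult_left_mono) auto
    finally show "(\<integral>\<omega>. bd \<omega> \<partial>M) \<le> 4 * (a\<^sup>2 * (max K 0 * C2 CARD('d)) + a\<^sup>2 * (max K 0 * C2 CARD('d)) + L\<^sup>2 * C4 CARD('d) + B\<^sup>2)" .
  qed
  finally show ?thesis unfolding a_def B_def .
qed

end

theorem corollary2:
  fixes M :: "'a measure" and \<mu> :: "'z measure"
    and X :: "(real^'d) set"
    and F :: "real^'d \<Rightarrow> 'z \<Rightarrow> real" and f :: "real^'d \<Rightarrow> real"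
    and K L lam :: real
    and x0 y0 :: "real^'d"
    and \<alpha> \<beta> :: "nat \<Rightarrow> real"
    and U x y :: "nat \<Rightarrow> 'a \<Rightarrow> real^'d"
    and \<zeta>1 \<zeta>2 :: "nat \<Rightarrow> 'a \<Rightarrow> 'z"
    and N1 N2 :: "nat \<Rightarrow> 'a \<Rightarrow> real"
    and g Mart :: "nat \<Rightarrow> 'a \<Rightarrow> real^'d"
    and G Fs :: "nat \<Rightarrow> 'a measure"
  assumes M: "prob_space M" and mu: "prob_space \<mu>"
    and X: "X \<noteq> {}" "compact X" "convex X"
    and F_meas: "(\<lambda>(v, z). F v z) \<in> borel_measurable (borel \<Otimes>\<^sub>M \<mu>)"
    and F_int: "\<And>v. integrable \<mu> (F v)"
    and f_def: "\<And>v. f v = (\<integral>z. F v z \<partial>\<mu>)"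
    and F_var: "\<And>v. integrable \<mu> (\<lambda>z. (F v z - f v)\<^sup>2) \<and> (\<integral>z. (F v z - f v)\<^sup>2 \<partial>\<mu>) \<le> K"
    and f_lip: "L-lipschitz_on UNIV f"
    and f_clarke: "clarke_regular f"
    and lam: "lam > 0"
    and x0: "x0 \<in> X"
    and step0: "\<alpha> 0 < 1" "\<beta> 0 < 1"
    and step_dec: "\<And>n. \<alpha> n > \<alpha> (Suc n)" "\<And>n. \<beta> n > \<beta> (Suc n)"
    and step_div: "filterlim (\<lambda>n. \<Sum>i<n. \<alpha> i) at_top sequentially"
                  "filterlim (\<lambda>n. \<Sum>i<n. \<beta> i) at_top sequentially"
    and step_sq: "summable (\<lambda>n. (\<alpha> n)\<^sup>2 + (\<beta> n)\<^sup>2)"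
    and step_ratio: "(\<lambda>n. \<alpha> n / \<beta> n) \<longlonglongrightarrow> 0"
    and U_meas: "\<And>n. U n \<in> borel_measurable M"
    and U_gauss: "\<And>n. distributed M lborel (U n) std_gauss_density"
    and U_indep: "prob_space.indep_vars M (\<lambda>_. borel) U UNIV"
    and zeta_meas: "\<And>n. \<zeta>1 n \<in> measurable M \<mu>" "\<And>n. \<zeta>2 n \<in> measurable M \<mu>"
    and G_def: "\<And>n. G n = sigma (space M)
          ((\<Union>m\<in>{..n}. gen_sets M (x m) borel \<union> gen_sets M (U m) borel)
           \<union> (\<Union>m\<in>{..<n}. gen_sets M (\<zeta>1 m) \<mu> \<union> gen_sets M (\<zeta>2 m) \<mu>))"
    and N1_def: "\<And>n \<omega>. N1 (Suc n) \<omega> =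
          F (x n \<omega> + lam *\<^sub>R U n \<omega>) (\<zeta>1 n \<omega>) - f (x n \<omega> + lam *\<^sub>R U n \<omega>)"
    and N2_def: "\<And>n \<omega>. N2 (Suc n) \<omega> =
          F (x n \<omega> - lam *\<^sub>R U n \<omega>) (\<zeta>2 n \<omega>) - f (x n \<omega> - lam *\<^sub>R U n \<omega>)"
    and N1_mds: "\<And>n. integrable M (N1 (Suc n)) \<and> integrable M (\<lambda>\<omega>. (N1 (Suc n) \<omega>)\<^sup>2)
          \<and> (AE \<omega> in M. real_cond_exp M (G n) (N1 (Suc n)) \<omega> = 0)
          \<and> (AE \<omega> in M. real_cond_exp M (G n) (\<lambda>\<omega>. (N1 (Suc n) \<omega>)\<^sup>2) \<omega> \<le> K)"
    and N2_mds: "\<And>n. integrable M (N2 (Suc n)) \<and> integrable M (\<lambda>\<omega>. (N2 (Suc n) \<omega>)\<^sup>2)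
          \<and> (AE \<omega> in M. real_cond_exp M (G n) (N2 (Suc n)) \<omega> = 0)
          \<and> (AE \<omega> in M. real_cond_exp M (G n) (\<lambda>\<omega>. (N2 (Suc n) \<omega>)\<^sup>2) \<omega> \<le> K)"
    and U_indep_past: "\<And>n. prob_space.indep_set M
          (sigma_sets (space M) (gen_sets M (U n) borel))
          (sigma_sets (space M)
             ((\<Union>m\<in>{..n}. gen_sets M (x m) borel)
              \<union> (\<Union>m\<in>{..<n}. gen_sets M (U m) borel \<union> gen_sets M (\<zeta>1 m) \<mu> \<union> gen_sets M (\<zeta>2 m) \<mu>)))"
    and g_def: "\<And>n \<omega>. g n \<omega> =
          ((F (x n \<omega> + lam *\<^sub>R U n \<omega>) (\<zeta>1 n \<omega>) - F (x n \<omega> - lam *\<^sub>R U n \<omega>) (\<zeta>2 n \<omega>)) / (2 * lam))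
          *\<^sub>R U n \<omega>"
    and y_init: "\<And>\<omega>. y 0 \<omega> = y0"
    and y_rec: "\<And>n \<omega>. y (Suc n) \<omega> = y n \<omega> + \<beta> n *\<^sub>R (g n \<omega> - y n \<omega>)"
    and x_init: "\<And>\<omega>. x 0 \<omega> = x0"
    and x_rec: "\<And>n \<omega>. x (Suc n) \<omega> = closest_point X (x n \<omega> - \<alpha> n *\<^sub>R y n \<omega>)"
    and Fs_def: "\<And>n. Fs n = sigma (space M) (\<Union>k\<in>{1..n}. gen_sets M (x k) borel)"
    and Mart_def: "\<And>n \<omega>. Mart (Suc n) \<omega> =
          g n \<omega> - (\<chi> i. real_cond_exp M (Fs n) (\<lambda>\<omega>'. g n \<omega>' $ i) \<omega>)"
  shows "\<forall>T>0. AE \<omega> in M.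
           ((\<lambda>n. SUP k\<in>{n..tau1 \<alpha> n T}. norm (\<Sum>m=n..k. \<alpha> m *\<^sub>R Mart (Suc m) \<omega>))
              \<longlongrightarrow> 0) sequentially"
proof -
  interpret S: setting M \<mu> X F f K L lam x0 y0 \<alpha> \<beta> U x y \<zeta>1 \<zeta>2 N1 N2 g Mart G Fs
    by (rule setting.intro) (rule assms)+
  define CM where "CM = 4 * ((1/(2*lam))\<^sup>2 * (max K 0 * C2 CARD('d)) + (1/(2*lam))\<^sup>2 * (max K 0 * C2 CARD('d))
     + L\<^sup>2 * C4 CARD('d) + (real CARD('d) * (L * S.m2G))\<^sup>2)"
  have CM0: "0 \<le> CM" unfolding CM_def using S.C2_nn S.C4_nn by simp
  have L2M: "(\<integral>\<^sup>+\<omega>. ennreal ((norm (Mart (Suc j) \<omega>))\<^sup>2) \<partial>M) \<le> ennreal CM" for j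
    unfolding CM_def by (rule S.Mart_L2)
  have MartM[measurable]: "Mart (Suc j) \<in> borel_measurable M" for j by (rule S.Mart_M)
  have iM: "integrable M (\<lambda>\<omega>. (norm (Mart (Suc j) \<omega>))\<^sup>2)" for j
    by (rule S.nn_int[OF _ _ L2M]) auto
  have lM: "(\<integral>\<omega>. (norm (Mart (Suc j) \<omega>))\<^sup>2 \<partial>M) \<le> CM" for j
    by (rule S.nn_real[OF iM _ L2M CM0]) simp
  define D where "D = (\<lambda>m \<omega>. \<alpha> m *\<^sub>R Mart (Suc m) \<omega>)"
  have cauchy: "AE \<omega> in M. Cauchy (\<lambda>n. \<Sum>m<n. D m \<omega>)"
  proof (rule prob_space.kolmo_cauchy[OF M, where H = S.H])
    show "subalgebra M (S.H j)" for j by (rule S.sub_H)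
    show "D m \<in> borel_measurable (S.H j)" if mj: "m < j" for m j
    proof -
      have [measurable]: "Mart (Suc m) \<in> borel_measurable (S.H j)" by (rule S.Mart_H[OF mj])
      show ?thesis unfolding D_def by measurable
    qed
    show "D m \<in> borel_measurable M" for m unfolding D_def by measurable
    show "integrable M (\<lambda>\<omega>. (norm (D m \<omega>))\<^sup>2)" for m
      unfolding D_def using iM[of m] by (simp add: power_mult_distrib)
    show "(\<integral>\<omega>. inner (Z \<omega>) (D j \<omega>) \<partial>M) = 0"
      if "Z \<in> borel_measurable (S.H j)" "integrable M (\<lambda>\<omega>. (norm (Z \<omega>))\<^sup>2)" for j Z
      unfolding D_def using S.orth_Mart[OF that] by simp
    show "summable (\<lambda>m. \<integral>\<omega>. (norm (D m \<omega>))\<^sup>2 \<partial>M)"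
    proof (rule summable_comparison_test)
      show "summable (\<lambda>m. CM * ((\<alpha> m)\<^sup>2 + (\<beta> m)\<^sup>2))" using step_sq by (rule summable_mult)
      show "\<exists>N. \<forall>n\<ge>N. norm (\<integral>\<omega>. (norm (D n \<omega>))\<^sup>2 \<partial>M) \<le> CM * ((\<alpha> n)\<^sup>2 + (\<beta> n)\<^sup>2)"
      proof (intro exI allI impI)
        fix n :: nat
        have e: "(\<integral>\<omega>. (norm (D n \<omega>))\<^sup>2 \<partial>M) = (\<alpha> n)\<^sup>2 * (\<integral>\<omega>. (norm (Mart (Suc n) \<omega>))\<^sup>2 \<partial>M)"
          unfolding D_def by (simp add: power_mult_distrib)
        have nn: "0 \<le> (\<integral>\<omega>. (norm (Mart (Suc n) \<omega>))\<^sup>2 \<partial>M)" by simp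
        have "(\<alpha> n)\<^sup>2 * (\<integral>\<omega>. (norm (Mart (Suc n) \<omega>))\<^sup>2 \<partial>M) \<le> (\<alpha> n)\<^sup>2 * CM"
          by (intro mult_left_mono lM) simp
        also have "\<dots> \<le> CM * ((\<alpha> n)\<^sup>2 + (\<beta> n)\<^sup>2)" using CM0 by (simp add: algebra_simps)
        finally show "norm (\<integral>\<omega>. (norm (D n \<omega>))\<^sup>2 \<partial>M) \<le> CM * ((\<alpha> n)\<^sup>2 + (\<beta> n)\<^sup>2)"
          using e nn by simp
      qed
    qed
  qed
  show ?thesis
  proof (intro allI impI)
    fix T :: real assume "T > 0"
    show "AE \<omega> in M. ((\<lambda>n. SUP k\<in>{n..tau1 \<alpha> n T}. norm (\<Sum>m=n..k. \<alpha> m *\<^sub>R Mart (Suc m) \<omega>)) \<longlongrightarrow> 0) sequentially"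
      using cauchy
    proof (rule AE_mp, intro AE_I2 impI)
      fix \<omega> assume c: "Cauchy (\<lambda>n. \<Sum>m<n. D m \<omega>)"
      show "((\<lambda>n. SUP k\<in>{n..tau1 \<alpha> n T}. norm (\<Sum>m=n..k. \<alpha> m *\<^sub>R Mart (Suc m) \<omega>)) \<longlongrightarrow> 0) sequentially"
        using window[OF c tau_ge[OF step_div(1)]] unfolding D_def .
    qed
  qed
qed


end
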